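(* Let $n\in\mathbb{N}$, let $r$ be a prime, $j$ an integer coprime to $r$, and $V$ real with $1\leqslant V<r$. Let $\tilde{\mathcal{V}}$ be any subset of $\mathcal{V}:=(V/2,V]\cap\mathbb{N}$. Then for every $\xi\in\mathbb{R}$, $$\sum_{(\lambda,\mu)\in\mathbb{F}_r^2}\left|\sum_{v\in\tilde{\mathcal{V}}}e_r\!\left(\lambda\sqrt{j(\mu-v)}\right)e(\xi v)\right|^{2n}\ll_n\left(V^{2n}+rV^{n}\right)r.$$
   Context: Notation: $e(x)=e^{2\pi i x}$, $e_r(x)=e(x/r)$. Modular square-root convention: for a prime $r$, an $r$-periodic $g$ and any $h$, $\sum_{s\in\mathcal{S}}g(\sqrt{s})h(s)$ means $\sum_{s\in\mathcal{S}}\sum_{k\bmod r,\ k^2\equiv s\bmod r}g(k)h(s)$, i.e. the sum runs over all modular square roots of $s$ modulo $r$ (a term with no square root contributes nothing). Thus the inner sum is $\sum_{v\in\tilde{\mathcal V}}\sum_{k\bmod r,\ k^2\equiv j(\mu-v)}e_r(\lambda k)e(\xi v)$. The implied constant depends only on $n$. *)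

theory Defs
  imports "HOL-Number_Theory.Number_Theory" "HOL-Analysis.Analysis"
begin

definition ee :: "real \<Rightarrow> complex" where
  "ee x = exp (2 * of_real pi * \<i> * of_real x)"

definition ee_r :: "nat \<Rightarrow> real \<Rightarrow> complex" where
  "ee_r r x = ee (x / real r)"

definition inner_sum :: "nat \<Rightarrow> int \<Rightarrow> nat set \<Rightarrow> real \<Rightarrow> int \<Rightarrow> int \<Rightarrow> complex" where
  "inner_sum r j Vt \<xi> a b =
     (\<Sum>v\<in>Vt. \<Sum>k\<in>{k\<in>{0..<int r}. [k^2 = j * (b - int v)] (mod int r)}.
        ee_r r (real_of_int (a * k)) * ee (\<xi> * real v))"

end

theory Submission
  imports Defs "HOL-Computational_Algebra.Computational_Algebra"
begin



definition pev :: "int poly \<Rightarrow> 'a::comm_ring_1 \<Rightarrow> 'a" where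
  "pev p x = poly (map_poly of_int p) x"

lemma map_poly_of_int_add: "map_poly (of_int :: int \<Rightarrow> 'a::comm_ring_1) (p + q) = map_poly of_int p + map_poly of_int q"
  by (rule poly_eqI) (simp add: coeff_map_poly)

lemma map_poly_of_int_smult: "map_poly (of_int :: int \<Rightarrow> 'a::comm_ring_1) (Polynomial.smult c q) = Polynomial.smult (of_int c) (map_poly of_int q)"
  by (rule poly_eqI) (simp add: coeff_map_poly)

lemma pev_add[simp]: "pev (p + q) x = pev p x + pev q x"
  by (simp add: pev_def map_poly_of_int_add)

lemma pev_smult[simp]: "pev (Polynomial.smult c q) x = of_int c * pev q x"
  by (simp add: pev_def map_poly_of_int_smult)

lemma pev_pCons[simp]: "pev (pCons a p) x = of_int a + x * pev p x"
  by (simp add: pev_def map_poly_pCons)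

lemma pev_0[simp]: "pev 0 x = 0"
  by (simp add: pev_def)

lemma pev_mult[simp]: "pev (p * q) x = pev p x * pev q x"
  by (induction p) (simp_all add: algebra_simps)

lemma pev_uminus[simp]: "pev (- p) x = - pev p x"
  using pev_add[of p "-p" x] by (simp add: add_eq_0_iff2)

lemma pev_diff[simp]: "pev (p - q) x = pev p x - pev q x"
  using pev_add[of "p - q" q x] by (simp add: algebra_simps)

lemma pev_int[simp]: "pev p (x::int) = poly p x"
  by (simp add: pev_def)

datatype mf = B "int poly" | N mf mf

fun wf :: "nat \<Rightarrow> mf \<Rightarrow> bool" where
  "wf 0 (B p) = True"
| "wf (Suc k) (N a b) = (wf k a \<and> wf k b)"
| "wf _ _ = False"

fun madd :: "mf \<Rightarrow> mf \<Rightarrow> mf" where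
  "madd (B p) (B q) = B (p + q)"
| "madd (N a b) (N c d) = N (madd a c) (madd b d)"
| "madd _ _ = B 0"

fun mneg :: "mf \<Rightarrow> mf" where
  "mneg (B p) = B (- p)"
| "mneg (N a b) = N (mneg a) (mneg b)"

fun msc :: "int poly \<Rightarrow> mf \<Rightarrow> mf" where
  "msc g (B p) = B (g * p)"
| "msc g (N a b) = N (msc g a) (msc g b)"

fun mmul :: "(nat \<Rightarrow> int poly) \<Rightarrow> nat \<Rightarrow> mf \<Rightarrow> mf \<Rightarrow> mf" where
  "mmul F 0 (B p) (B q) = B (p * q)"
| "mmul F (Suc k) (N a b) (N c d) =
     N (madd (mmul F k a c) (msc (F k) (mmul F k b d))) (madd (mmul F k a d) (mmul F k b c))"
| "mmul F _ _ _ = B 0"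

fun mcst :: "nat \<Rightarrow> int poly \<Rightarrow> mf" where
  "mcst 0 p = B p"
| "mcst (Suc k) p = N (mcst k p) (mcst k 0)"

fun ev :: "'a::comm_ring_1 \<Rightarrow> (nat \<Rightarrow> 'a) \<Rightarrow> nat \<Rightarrow> mf \<Rightarrow> 'a" where
  "ev x s 0 (B p) = pev p x"
| "ev x s (Suc k) (N a b) = ev x s k a + s k * ev x s k b"
| "ev x s _ _ = 0"

fun mdeg :: "mf \<Rightarrow> nat" where
  "mdeg (B p) = degree p"
| "mdeg (N a b) = max (mdeg a) (mdeg b)"

fun Zr :: "int \<Rightarrow> mf \<Rightarrow> bool" where
  "Zr r (B p) = (\<forall>i. r dvd Polynomial.coeff p i)"
| "Zr r (N a b) = (Zr r a \<and> Zr r b)"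

lemma wf_madd[simp]: "wf k x \<Longrightarrow> wf k y \<Longrightarrow> wf k (madd x y)"
  by (induction k arbitrary: x y) (case_tac x; case_tac y; auto)+

lemma wf_mneg[simp]: "wf k x \<Longrightarrow> wf k (mneg x)"
  by (induction k arbitrary: x) (case_tac x; auto)+

lemma wf_msc[simp]: "wf k x \<Longrightarrow> wf k (msc g x)"
  by (induction k arbitrary: x) (case_tac x; auto)+

lemma wf_mmul[simp]: "wf k x \<Longrightarrow> wf k y \<Longrightarrow> wf k (mmul F k x y)"
  by (induction k arbitrary: x y) (case_tac x; case_tac y; auto)+

lemma wf_mcst[simp]: "wf k (mcst k p)"
  by (induction k arbitrary: p) auto

lemma wfE0: "wf 0 x \<Longrightarrow> (\<And>p. x = B p \<Longrightarrow> P) \<Longrightarrow> P"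
  by (cases x) auto
lemma wfES: "wf (Suc k) x \<Longrightarrow> (\<And>a b. x = N a b \<Longrightarrow> wf k a \<Longrightarrow> wf k b \<Longrightarrow> P) \<Longrightarrow> P"
  by (cases x) auto

definition valid :: "(nat \<Rightarrow> int poly) \<Rightarrow> nat \<Rightarrow> 'a::comm_ring_1 \<Rightarrow> (nat \<Rightarrow> 'a) \<Rightarrow> bool" where
  "valid F k x s \<longleftrightarrow> (\<forall>l<k. s l ^ 2 = pev (F l) x)"

lemma ev_madd[simp]: "wf k a \<Longrightarrow> wf k b \<Longrightarrow> ev x s k (madd a b) = ev x s k a + ev x s k b"
proof (induction k arbitrary: a b)
  case 0 then show ?case by (auto elim!: wfE0)
next
  case (Suc k) then show ?case by (auto elim!: wfES simp: algebra_simps)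
qed

lemma ev_mneg[simp]: "wf k a \<Longrightarrow> ev x s k (mneg a) = - ev x s k a"
proof (induction k arbitrary: a)
  case 0 then show ?case by (auto elim!: wfE0)
next
  case (Suc k) then show ?case by (auto elim!: wfES simp: algebra_simps)
qed

lemma ev_msc[simp]: "wf k a \<Longrightarrow> ev x s k (msc g a) = pev g x * ev x s k a"
proof (induction k arbitrary: a)
  case 0 then show ?case by (auto elim!: wfE0)
next
  case (Suc k) then show ?case by (auto elim!: wfES simp: algebra_simps)
qed

lemma ev_mcst[simp]: "ev x s k (mcst k p) = pev p x"
  by (induction k arbitrary: p) auto

lemma ev_mmul[simp]: "valid F k x s \<Longrightarrow> wf k a \<Longrightarrow> wf k b \<Longrightarrow> ev x s k (mmul F k a b) = ev x s k a * ev x s k b"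
proof (induction k arbitrary: a b)
  case 0 then show ?case by (auto elim!: wfE0)
next
  case (Suc k)
  have v: "valid F k x s" and sq: "s k ^ 2 = pev (F k) x"
    using Suc.prems(1) by (auto simp: valid_def)
  from Suc.prems(2,3) obtain a1 a2 b1 b2 where "a = N a1 a2" "b = N b1 b2" "wf k a1" "wf k a2" "wf k b1" "wf k b2"
    by (auto elim!: wfES)
  then show ?case
    by (simp add: Suc.IH[OF v] sq[symmetric]) (simp add: algebra_simps power2_eq_square)
qed


lemma ev_upd: "wf k a \<Longrightarrow> k \<le> l \<Longrightarrow> ev x (s(l := c)) k a = ev x s k a"
proof (induction k arbitrary: a)
  case 0 then show ?case by (auto elim!: wfE0)
next
  case (Suc k) then show ?case by (auto elim!: wfES)
qed

lemma pev_nz_finite: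
  assumes "F \<noteq> 0" shows "finite {x::complex. pev F x = 0}"
proof -
  have "map_poly (of_int :: int \<Rightarrow> complex) F \<noteq> 0"
    using assms by (subst map_poly_eq_0_iff) (auto simp: coeff_map_poly)
  then show ?thesis unfolding pev_def by (rule poly_roots_finite)
qed

lemma ev_zero_imp:
  assumes "\<forall>l<k. F l \<noteq> 0" "wf k x" "finite E"
    "\<forall>(\<mu>::complex) s. \<mu> \<notin> E \<longrightarrow> valid F k \<mu> s \<longrightarrow> ev \<mu> s k x = 0"
  shows "x = mcst k 0"
  using assms
proof (induction k arbitrary: x E)
  case 0
  then obtain p where p: "x = B p" by (auto elim!: wfE0)
  have "{\<mu>::complex. pev p \<mu> = 0} \<supseteq> - E"
    using 0(4) by (auto simp: p valid_def)
  moreover have "infinite (- E :: complex set)"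
    using 0(3) by (simp add: Compl_eq_Diff_UNIV infinite_UNIV_char_0)
  ultimately have "infinite {\<mu>::complex. pev p \<mu> = 0}"
    using finite_subset by blast
  then have "p = 0" using pev_nz_finite by blast
  then show ?case by (simp add: p)
next
  case (Suc k)
  from Suc.prems(2) obtain a b where x: "x = N a b" and wa: "wf k a" and wb: "wf k b"
    by (auto elim!: wfES)
  have Fk: "F k \<noteq> 0" using Suc.prems(1) by auto
  define E' where "E' = E \<union> {\<mu>::complex. pev (F k) \<mu> = 0}"
  have fE': "finite E'" using Suc.prems(3) pev_nz_finite[OF Fk] by (simp add: E'_def)
  have both: "ev \<mu> s k a = 0 \<and> ev \<mu> s k b = 0" if "\<mu> \<notin> E'" "valid F k \<mu> s" for \<mu> s
  proof -
    define c where "c = csqrt (pev (F k) \<mu>)"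
    have cnz: "c \<noteq> 0" using that(1) by (simp add: c_def E'_def)
    have v1: "valid F (Suc k) \<mu> (s(k := c))" and v2: "valid F (Suc k) \<mu> (s(k := -c))"
      using that(2) by (auto simp: valid_def c_def less_Suc_eq)
    have "ev \<mu> (s(k := c)) (Suc k) x = 0" "ev \<mu> (s(k := -c)) (Suc k) x = 0"
      using Suc.prems(4) that(1) v1 v2 by (auto simp: E'_def)
    then have "ev \<mu> s k a + c * ev \<mu> s k b = 0" "ev \<mu> s k a - c * ev \<mu> s k b = 0"
      by (simp_all add: x ev_upd[OF wa] ev_upd[OF wb])
    then have "2 * c * ev \<mu> s k b = 0" "2 * ev \<mu> s k a = 0"
      by (simp_all add: algebra_simps)
    then show ?thesis using cnz by simp
  qed
  have "a = mcst k 0"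
    using Suc.IH[of a E'] Suc.prems(1) wa fE' both by auto
  moreover have "b = mcst k 0"
    using Suc.IH[of b E'] Suc.prems(1) wb fE' both by auto
  ultimately show ?case by (simp add: x)
qed

lemma madd_mneg_zero: "wf k x \<Longrightarrow> wf k y \<Longrightarrow> madd x (mneg y) = mcst k 0 \<Longrightarrow> x = y"
proof (induction k arbitrary: x y)
  case 0 then show ?case by (auto elim!: wfE0)
next
  case (Suc k) then show ?case by (auto elim!: wfES)
qed

lemma mf_eqI:
  assumes "\<forall>l<k. F l \<noteq> 0" "wf k x" "wf k y"
    "\<And>(\<mu>::complex) s. valid F k \<mu> s \<Longrightarrow> ev \<mu> s k x = ev \<mu> s k y"
  shows "x = y"
proof -
  have "madd x (mneg y) = mcst k 0"
    by (rule ev_zero_imp[of k F _ "{}"]) (use assms in auto)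
  then show ?thesis using assms(2,3) madd_mneg_zero by blast
qed

lemma Zr_madd[simp]: "wf k x \<Longrightarrow> wf k y \<Longrightarrow> Zr r x \<Longrightarrow> Zr r y \<Longrightarrow> Zr r (madd x y)"
proof (induction k arbitrary: x y)
  case 0 then show ?case by (auto elim!: wfE0)
next
  case (Suc k) then show ?case by (auto elim!: wfES)
qed

lemma Zr_mneg[simp]: "wf k x \<Longrightarrow> Zr r (mneg x) = Zr r x"
proof (induction k arbitrary: x)
  case 0 then show ?case by (auto elim!: wfE0)
next
  case (Suc k) then show ?case by (auto elim!: wfES)
qed

lemma Zr_poly_mult: "\<forall>i. (r::int) dvd Polynomial.coeff p i \<Longrightarrow> r dvd Polynomial.coeff (p * q) n"
proof -
  assume h: "\<forall>i. r dvd Polynomial.coeff p i"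
  show ?thesis unfolding coeff_mult
    by (rule comm_semiring_1_class.dvd_sum) (metis h dvd_mult2)
qed

lemma Zr_poly_mult2: "\<forall>i. (r::int) dvd Polynomial.coeff q i \<Longrightarrow> r dvd Polynomial.coeff (p * q) n"
  using Zr_poly_mult[of r q p n] by (simp add: mult.commute)

lemma Zr_msc[simp]: "wf k x \<Longrightarrow> Zr r x \<Longrightarrow> Zr r (msc g x)"
proof (induction k arbitrary: x)
  case 0 then show ?case by (auto elim!: wfE0 simp: Zr_poly_mult mult.commute[of g])
next
  case (Suc k) then show ?case by (auto elim!: wfES)
qed

lemma Zr_mmul: "wf k x \<Longrightarrow> wf k y \<Longrightarrow> Zr r x \<or> Zr r y \<Longrightarrow> Zr r (mmul F k x y)"
proof (induction k arbitrary: x y)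
  case 0 then show ?case by (auto elim!: wfE0 simp: Zr_poly_mult Zr_poly_mult2)
next
  case (Suc k)
  from Suc.prems(1,2) obtain a b c d where xy: "x = N a b" "y = N c d" and
    w: "wf k a" "wf k b" "wf k c" "wf k d" by (auto elim!: wfES)
  have z: "Zr r (mmul F k a c)" "Zr r (mmul F k b d)" "Zr r (mmul F k a d)" "Zr r (mmul F k b c)"
    using Suc.prems(3) w by (auto simp: xy intro!: Suc.IH)
  show ?case using z w by (simp add: xy Zr_madd[of k] Zr_msc[of k])
qed

lemma Zr_mmul1: "wf k x \<Longrightarrow> wf k y \<Longrightarrow> Zr r x \<Longrightarrow> Zr r (mmul F k x y)"
  and Zr_mmul2: "wf k x \<Longrightarrow> wf k y \<Longrightarrow> Zr r y \<Longrightarrow> Zr r (mmul F k x y)"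
  by (simp_all add: Zr_mmul)

lemma Zr_mcst[simp]: "Zr r (mcst k p) = (\<forall>i. r dvd Polynomial.coeff p i)"
  by (induction k arbitrary: p) auto

lemma Zr_poly_dvd: "\<forall>i. r dvd Polynomial.coeff p i \<Longrightarrow> r dvd poly p (x::int)"
  by (simp add: poly_altdef dvd_sum)

lemma Zr_ev: "wf k a \<Longrightarrow> Zr r a \<Longrightarrow> r dvd ev (x::int) s k a"
proof (induction k arbitrary: a)
  case 0 then show ?case by (auto elim!: wfE0 simp: Zr_poly_dvd)
next
  case (Suc k) then show ?case by (auto elim!: wfES)
qed

lemma ev_mmul_mod:
  assumes "\<forall>l<k. r dvd (s l ^ 2 - poly (F l) x)" "wf k a" "wf k b"
  shows "r dvd (ev (x::int) s k (mmul F k a b) - ev x s k a * ev x s k b)"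
  using assms
proof (induction k arbitrary: a b)
  case 0 then show ?case by (auto elim!: wfE0)
next
  case (Suc k)
  from Suc.prems(2,3) obtain a1 a2 b1 b2 where ab: "a = N a1 a2" "b = N b1 b2" and
    w: "wf k a1" "wf k a2" "wf k b1" "wf k b2"
    by (auto elim!: wfES)
  have hyp: "\<forall>l<k. r dvd (s l ^ 2 - poly (F l) x)" using Suc.prems(1) by auto
  define f where "f = poly (F k) x"
  have fs: "r dvd (s k ^ 2 - f)" using Suc.prems(1) by (auto simp: f_def)
  let ?e = "ev x s k"
  have d1: "r dvd ?e (mmul F k a1 b1) - ?e a1 * ?e b1" using Suc.IH[OF hyp w(1,3)] .
  have d2: "r dvd ?e (mmul F k a2 b2) - ?e a2 * ?e b2" using Suc.IH[OF hyp w(2,4)] .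
  have d3: "r dvd ?e (mmul F k a1 b2) - ?e a1 * ?e b2" using Suc.IH[OF hyp w(1,4)] .
  have d4: "r dvd ?e (mmul F k a2 b1) - ?e a2 * ?e b1" using Suc.IH[OF hyp w(2,3)] .
  have eq: "ev x s (Suc k) (mmul F (Suc k) a b) - ev x s (Suc k) a * ev x s (Suc k) b
     = (?e (mmul F k a1 b1) - ?e a1 * ?e b1) + f * (?e (mmul F k a2 b2) - ?e a2 * ?e b2)
       + s k * ((?e (mmul F k a1 b2) - ?e a1 * ?e b2) + (?e (mmul F k a2 b1) - ?e a2 * ?e b1))
       - ?e a2 * ?e b2 * (s k ^ 2 - f)"
    using w by (simp add: ab f_def algebra_simps power2_eq_square)
  show ?case unfolding eq
    by (intro dvd_diff dvd_add dvd_mult d1 d2 d3 d4 fs)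
qed


definition Z0 :: "int \<Rightarrow> int poly \<Rightarrow> bool" where
  "Z0 r p \<longleftrightarrow> (\<forall>i. r dvd Polynomial.coeff p i)"

lemma Zr_B[simp]: "Zr r (B p) = Z0 r p" by (simp add: Z0_def)

lemma Z0_add: "Z0 r p \<Longrightarrow> Z0 r q \<Longrightarrow> Z0 r (p + q)" by (simp add: Z0_def)
lemma Z0_diff: "Z0 r p \<Longrightarrow> Z0 r q \<Longrightarrow> Z0 r (p - q)" by (simp add: Z0_def)
lemma Z0_uminus[simp]: "Z0 r (- p) = Z0 r p" by (simp add: Z0_def)
lemma Z0_mult1: "Z0 r p \<Longrightarrow> Z0 r (p * q)" by (simp add: Z0_def Zr_poly_mult)
lemma Z0_mult2: "Z0 r q \<Longrightarrow> Z0 r (p * q)" by (simp add: Z0_def Zr_poly_mult2)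
lemma Z0_const[simp]: "Z0 r [:c:] = (r dvd c)"
  by (auto simp: Z0_def coeff_pCons split: nat.splits)
lemma Z0_smult: "r dvd c \<Longrightarrow> Z0 r (Polynomial.smult c q)" by (simp add: Z0_def)
lemma Z0_0[simp]: "Z0 r 0" by (simp add: Z0_def)
lemma Z0_diff_cancel: "Z0 r (p - q) \<Longrightarrow> Z0 r q \<Longrightarrow> Z0 r p"
  using Z0_add[of r "p - q" q] by simp
lemma Z0_poly: "Z0 r p \<Longrightarrow> r dvd poly p (x::int)" by (simp add: Z0_def Zr_poly_dvd)
lemma Z0_monic_lin: "\<not> Z0 r [:a, 1:]" if "\<not> is_unit r" for r :: int
proof
  assume "Z0 r [:a, 1:]"
  then have "r dvd Polynomial.coeff [:a, 1:] 1" unfolding Z0_def by blast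
  then show False using that by simp
qed

lemma Z0_content: "Z0 r p \<longleftrightarrow> r dvd content p"
proof
  assume h: "Z0 r p"
  have "p = [:r:] * map_poly (\<lambda>c. c div r) p"
  proof (rule poly_eqI)
    fix n
    have "r dvd Polynomial.coeff p n" using h by (simp add: Z0_def)
    then show "Polynomial.coeff p n = Polynomial.coeff ([:r:] * map_poly (\<lambda>c. c div r) p) n"
      by (simp add: coeff_map_poly)
  qed
  then have "[:r:] dvd p" by (metis dvd_triv_left)
  then show "r dvd content p" by (simp add: const_poly_dvd_iff_dvd_content)
next
  assume "r dvd content p"
  then show "Z0 r p" unfolding Z0_def using content_dvd_coeff dvd_trans by blast
qed

lemma Z0_prime_mult:
  assumes "prime r" "Z0 r (p * q)" shows "Z0 r p \<or> Z0 r q"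
  using assms by (simp add: Z0_content content_mult prime_dvd_mult_iff)

lemma poly_root_count:
  fixes r :: int
  assumes "prime r" "\<not> Z0 r p"
  shows "card {x\<in>{0..<r}. r dvd poly p x} \<le> degree p"
  using assms(2)
proof (induction "degree p" arbitrary: p rule: less_induct)
  case less
  show ?case
  proof (cases "{x\<in>{0..<r}. r dvd poly p x} = {}")
    case True then show ?thesis unfolding True by simp
  next
    case False
    then obtain x0 where x0: "x0 \<in> {0..<r}" "r dvd poly p x0" by auto
    define q where "q = synthetic_div p x0"
    have pq: "p = [:-x0, 1:] * q + [:poly p x0:]"
      using synthetic_div_correct'[of x0 p] by (simp add: q_def)
    have nq: "\<not> Z0 r q"
    proof
      assume "Z0 r q"
      then have "Z0 r ([:-x0, 1:] * q + [:poly p x0:])"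
        by (intro Z0_add Z0_mult2) (simp_all add: x0)
      then show False using less.prems pq by simp
    qed
    have dp: "degree p \<noteq> 0"
    proof
      assume "degree p = 0"
      then have "p = [:poly p x0:]" by (metis degree_0_id poly_const_conv)
      then have "Z0 r p" using x0 by (metis Z0_const)
      then show False using less.prems by simp
    qed
    have dq: "degree q < degree p" using dp by (simp add: q_def degree_synthetic_div)
    have sub: "{x\<in>{0..<r}. r dvd poly p x} \<subseteq> insert x0 {x\<in>{0..<r}. r dvd poly q x}"
    proof
      fix x assume xs: "x \<in> {x\<in>{0..<r}. r dvd poly p x}"
      show "x \<in> insert x0 {x\<in>{0..<r}. r dvd poly q x}"
      proof (cases "x = x0")
        case False
        have "poly p x = (x - x0) * poly q x + poly p x0" by (subst pq) (simp add: algebra_simps)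
        then have "r dvd (x - x0) * poly q x" using xs x0 by (metis dvd_add_left_iff mem_Collect_eq)
        moreover have "\<not> r dvd (x - x0)"
        proof
          assume "r dvd x - x0"
          then have "x mod r = x0 mod r" by (simp add: mod_eq_dvd_iff)
          then show False using xs x0 False by simp
        qed
        ultimately have "r dvd poly q x" using assms(1) by (simp add: prime_dvd_mult_iff)
        then show ?thesis using xs by simp
      qed simp
    qed
    have "card {x\<in>{0..<r}. r dvd poly p x} \<le> card (insert x0 {x\<in>{0..<r}. r dvd poly q x})"
      by (rule card_mono[OF _ sub]) (auto intro: finite_subset[of _ "{0..<r}"])
    also have "\<dots> \<le> Suc (card {x\<in>{0..<r}. r dvd poly q x})" by (simp add: card_insert_le_m1)
    also have "\<dots> \<le> Suc (degree q)" using less.hyps[OF dq nq] by simp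
    also have "\<dots> \<le> degree p" using dq by simp
    finally show ?thesis .
  qed
qed

lemma base_nonsquare:
  fixes r y :: int
  assumes "prime r" "\<not> r dvd poly h y"
  shows "Z0 r (Ap * Ap - [:-y, 1:] * h * (Bp * Bp)) \<Longrightarrow> Z0 r Bp"
proof (induction "degree Bp" arbitrary: Ap Bp rule: less_induct)
  case less
  let ?L = "[:-y, 1:] :: int poly"
  have nr: "\<not> is_unit r" using assms(1) not_prime_unit by blast
  have "r dvd poly (Ap * Ap - ?L * h * (Bp * Bp)) y" using less.prems by (rule Z0_poly)
  then have "r dvd poly Ap y * poly Ap y" by simp
  then have a0: "r dvd poly Ap y" using assms(1) by (simp add: prime_dvd_mult_iff)
  define Aq where "Aq = synthetic_div Ap y"
  define Ca where "Ca = [:poly Ap y:]"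
  have A: "Ap = ?L * Aq + Ca" using synthetic_div_correct'[of y Ap] by (simp add: Aq_def Ca_def)
  define Q1 where "Q1 = ?L * Aq * Aq - h * Bp * Bp"
  have e0: "\<And>L::int poly. L * (L * Aq * Aq - h * Bp * Bp) = ((L * Aq + Ca) * (L * Aq + Ca) - L * h * (Bp * Bp)) - Ca * (2 * L * Aq + Ca)"
    by (simp add: algebra_simps)
  have e: "?L * Q1 = ((?L * Aq + Ca) * (?L * Aq + Ca) - ?L * h * (Bp * Bp)) - Ca * (2 * ?L * Aq + Ca)"
    unfolding Q1_def by (rule e0)
  have "Z0 r (Ca * (2 * ?L * Aq + Ca))" using a0 by (intro Z0_mult1) (simp add: Ca_def)
  then have "Z0 r (?L * Q1)"
    using e less.prems unfolding A[symmetric] by (metis Z0_diff)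
  then have zq1: "Z0 r Q1" using Z0_prime_mult[OF assms(1)] Z0_monic_lin[OF nr] by blast
  have "r dvd poly Q1 y" using zq1 by (rule Z0_poly)
  then have "r dvd poly h y * (poly Bp y * poly Bp y)" by (simp add: Q1_def mult.assoc)
  then have b0: "r dvd poly Bp y" using assms by (simp add: prime_dvd_mult_iff)
  define Bq where "Bq = synthetic_div Bp y"
  define Cb where "Cb = [:poly Bp y:]"
  have Bd: "Bp = ?L * Bq + Cb" using synthetic_div_correct'[of y Bp] by (simp add: Bq_def Cb_def)
  show ?case
  proof (cases "degree Bp = 0")
    case True
    then have "Bp = [:poly Bp y:]" by (metis degree_0_id poly_const_conv)
    then show ?thesis using b0 by (metis Z0_const)
  next
    case False
    have e20: "\<And>L::int poly. L * (Aq * Aq - L * h * (Bq * Bq)) = (L * Aq * Aq - h * (L * Bq + Cb) * (L * Bq + Cb)) + h * (Cb * (2 * L * Bq + Cb))"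
      by (simp add: algebra_simps)
    have e2: "?L * (Aq * Aq - ?L * h * (Bq * Bq)) = Q1 + h * (Cb * (2 * ?L * Bq + Cb))"
      unfolding Q1_def by (rule e20[of ?L, folded Bd])
    have "Z0 r (h * (Cb * (2 * ?L * Bq + Cb)))" using b0 by (intro Z0_mult2 Z0_mult1) (simp add: Cb_def)
    then have "Z0 r (?L * (Aq * Aq - ?L * h * (Bq * Bq)))"
      unfolding e2 using zq1 by (metis Z0_add)
    then have "Z0 r (Aq * Aq - ?L * h * (Bq * Bq))"
      using Z0_prime_mult[OF assms(1)] Z0_monic_lin[OF nr] by blast
    moreover have "degree Bq < degree Bp" using False by (simp add: Bq_def degree_synthetic_div)
    ultimately have "Z0 r Bq" using less.hyps by blast
    then have "Z0 r (?L * Bq + Cb)" by (intro Z0_add Z0_mult2) (simp_all add: b0 Cb_def)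
    then show ?thesis using Bd by simp
  qed
qed


lemma Zr_double: "prime r \<Longrightarrow> r > 2 \<Longrightarrow> wf k x \<Longrightarrow> Zr r (madd x x) \<Longrightarrow> Zr r x"
proof (induction k arbitrary: x)
  case 0
  then obtain p where p: "x = B p" by (auto elim!: wfE0)
  have "r dvd Polynomial.coeff p i" for i
  proof -
    have "Zr r (B (p + p))" using 0(4) by (simp only: p madd.simps)
    then have "r dvd Polynomial.coeff (p + p) i" by (simp only: Zr.simps)
    then have "r dvd 2 * Polynomial.coeff p i" by (simp only: coeff_add mult_2)
    moreover have "\<not> r dvd 2"
    proof
      assume "r dvd 2" then have "r \<le> 2" by (simp add: zdvd_imp_le)
      then show False using 0(2) by simp
    qed
    ultimately show ?thesis using 0(1) by (simp add: prime_dvd_mult_iff)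
  qed
  then show ?case by (simp add: p Z0_def)
next
  case (Suc k)
  obtain a b where ab: "x = N a b" "wf k a" "wf k b" using Suc.prems(3) by (auto elim!: wfES)
  have "Zr r (madd a a)" "Zr r (madd b b)" using Suc.prems(4) by (simp_all add: ab)
  then have "Zr r a" "Zr r b" using Suc.IH[OF Suc.prems(1,2)] ab by blast+
  then show ?case using ab by simp
qed

fun bd :: "nat \<Rightarrow> nat \<Rightarrow> nat" where
  "bd 0 d = d"
| "bd (Suc k) d = bd k (2 * d + k + 1)"

lemma mdeg_madd: "wf k x \<Longrightarrow> wf k z \<Longrightarrow> mdeg (madd x z) \<le> max (mdeg x) (mdeg z)"
proof (induction k arbitrary: x z)
  case 0 then show ?case by (auto elim!: wfE0 simp: degree_add_le_max)
next
  case (Suc k)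
  obtain a b c d where "x = N a b" "z = N c d" "wf k a" "wf k b" "wf k c" "wf k d"
    using Suc.prems by (auto elim!: wfES)
  then show ?case using Suc.IH[of a c] Suc.IH[of b d] by auto
qed

lemma mdeg_mneg: "wf k x \<Longrightarrow> mdeg (mneg x) = mdeg x"
proof (induction k arbitrary: x)
  case 0 then show ?case by (auto elim!: wfE0)
next
  case (Suc k) then show ?case by (auto elim!: wfES)
qed

lemma mdeg_msc: "wf k x \<Longrightarrow> mdeg (msc g x) \<le> degree g + mdeg x"
proof (induction k arbitrary: x)
  case 0 then show ?case by (auto elim!: wfE0 simp: degree_mult_le)
next
  case (Suc k)
  obtain a b where "x = N a b" "wf k a" "wf k b" using Suc.prems by (auto elim!: wfES)
  then show ?case using Suc.IH[of a] Suc.IH[of b] by auto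
qed

lemma mdeg_mmul:
  assumes "\<forall>l. degree (F l) \<le> 1"
  shows "wf k x \<Longrightarrow> wf k z \<Longrightarrow> mdeg (mmul F k x z) \<le> mdeg x + mdeg z + k"
proof (induction k arbitrary: x z)
  case 0 then show ?case by (auto elim!: wfE0 simp: degree_mult_le)
next
  case (Suc k)
  obtain a b c d where xz: "x = N a b" "z = N c d" and w: "wf k a" "wf k b" "wf k c" "wf k d"
    using Suc.prems by (auto elim!: wfES)
  have h1: "mdeg (mmul F k a c) \<le> mdeg a + mdeg c + k" using Suc.IH w by blast
  have h2: "mdeg (mmul F k b d) \<le> mdeg b + mdeg d + k" using Suc.IH w by blast
  have h3: "mdeg (mmul F k a d) \<le> mdeg a + mdeg d + k" using Suc.IH w by blast
  have h4: "mdeg (mmul F k b c) \<le> mdeg b + mdeg c + k" using Suc.IH w by blast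
  have wbd: "wf k (mmul F k b d)" using w by simp
  have dF: "degree (F k) \<le> 1" using assms by simp
  have "mdeg (msc (F k) (mmul F k b d)) \<le> degree (F k) + mdeg (mmul F k b d)"
    by (rule mdeg_msc[OF wbd])
  then have h5: "mdeg (msc (F k) (mmul F k b d)) \<le> 1 + mdeg (mmul F k b d)" using dF by linarith
  have c1: "mdeg (madd (mmul F k a c) (msc (F k) (mmul F k b d))) \<le> mdeg x + mdeg z + Suc k"
    using mdeg_madd[of k "mmul F k a c" "msc (F k) (mmul F k b d)"] w h1 h2 h5 by (auto simp: xz)
  have c2: "mdeg (madd (mmul F k a d) (mmul F k b c)) \<le> mdeg x + mdeg z + Suc k"
    using mdeg_madd[of k "mmul F k a d" "mmul F k b c"] w h3 h4 by (auto simp: xz)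
  show ?case using c1 c2 by (simp add: xz)
qed

fun lin :: "(nat \<Rightarrow> int) \<Rightarrow> nat \<Rightarrow> mf" where
  "lin e 0 = B 0"
| "lin e (Suc k) = N (lin e k) (mcst k [:e k:])"

lemma wf_lin[simp]: "wf k (lin e k)" by (induction k) auto

lemma mdeg_mcst[simp]: "mdeg (mcst k p) = degree p" by (induction k arbitrary: p) auto

lemma mdeg_lin[simp]: "mdeg (lin e k) = 0" by (induction k) auto

lemma ev_lin: "ev (x::int) s k (lin e k) = (\<Sum>l<k. e l * s l)"
  by (induction k) (auto simp: algebra_simps)

locale qsetup =
  fixes r :: int and j :: int and y :: "nat \<Rightarrow> int" and m :: nat
  assumes r_prime: "prime r" and r_gt2: "r > 2" and j_cop: "\<not> r dvd j"
    and y_dist: "\<And>l l'. l < m \<Longrightarrow> l' < m \<Longrightarrow> l \<noteq> l' \<Longrightarrow> \<not> r dvd (y l - y l')"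
begin

definition F :: "nat \<Rightarrow> int poly" where "F l = [:- (j * y l), j:]"
definition G :: "nat set \<Rightarrow> int \<Rightarrow> int poly" where "G T c = Polynomial.smult c (\<Prod>l\<in>T. F l)"

lemma j_nz: "j \<noteq> 0" using j_cop by auto

lemma F_nz: "F l \<noteq> 0" using j_nz by (simp add: F_def)

lemma Fnz_all: "\<forall>l<k. F l \<noteq> 0" using F_nz by simp

lemma G_single[simp]: "G {k} 1 = F k" by (simp add: G_def)

lemma G_insert: "finite T \<Longrightarrow> k \<notin> T \<Longrightarrow> G (insert k T) c = F k * G T c"
  by (simp add: G_def)

lemma poly_F: "poly (F l) x = j * (x - y l)" by (simp add: F_def algebra_simps)

lemma degree_F: "degree (F l) \<le> 1" by (simp add: F_def)

lemma DS:
  "k \<le> m \<Longrightarrow> (\<forall>x z. wf k x \<longrightarrow> wf k z \<longrightarrow> Zr r (mmul F k x z) \<longrightarrow> Zr r x \<or> Zr r z) \<and>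
     (\<forall>T c A Bv. T \<subseteq> {k..<m} \<longrightarrow> T \<noteq> {} \<longrightarrow> \<not> r dvd c \<longrightarrow> wf k A \<longrightarrow> wf k Bv \<longrightarrow>
        Zr r (madd (mmul F k A A) (mneg (msc (G T c) (mmul F k Bv Bv)))) \<longrightarrow> Zr r Bv)"
proof (induction k)
  case 0
  have D: "Zr r x \<or> Zr r z" if w: "wf 0 x" "wf 0 z" and h: "Zr r (mmul F 0 x z)" for x z
  proof -
    obtain p q where pq: "x = B p" "z = B q" using w by (auto elim!: wfE0)
    have "Z0 r (p * q)" using h by (simp add: pq Z0_def)
    then show ?thesis using Z0_prime_mult[OF r_prime] by (simp add: pq Z0_def)
  qed
  have S: "Zr r Bv" if T: "T \<subseteq> {0..<m}" "T \<noteq> {}" and c: "\<not> r dvd c" and w: "wf 0 A" "wf 0 Bv"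
    and h: "Zr r (madd (mmul F 0 A A) (mneg (msc (G T c) (mmul F 0 Bv Bv))))" for T c A Bv
  proof -
    obtain a b where ab: "A = B a" "Bv = B b" using w by (auto elim!: wfE0)
    obtain t where t: "t \<in> T" using T by auto
    have tm: "t < m" using T t by auto
    have fT: "finite T" using T finite_subset by blast
    define h where "h = Polynomial.smult (c * j) (\<Prod>l\<in>T - {t}. F l)"
    have Gh: "G T c = [:- y t, 1:] * h"
    proof -
      have "G T c = Polynomial.smult c (F t * (\<Prod>l\<in>T - {t}. F l))"
        using fT t by (simp add: G_def prod.remove)
      also have "F t = Polynomial.smult j [:- y t, 1:]" by (simp add: F_def)
      also have "\<And>L P. Polynomial.smult c (Polynomial.smult j L * P) = L * Polynomial.smult (c * j) P"
        by (simp add: mult.commute)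
      finally show ?thesis by (simp add: h_def)
    qed
    have hy: "\<not> r dvd poly h (y t)"
    proof
      assume "r dvd poly h (y t)"
      then have "r dvd c * j * (\<Prod>l\<in>T - {t}. j * (y t - y l))"
        by (simp add: h_def poly_prod poly_F)
      then have "r dvd c \<or> r dvd j \<or> (\<exists>l\<in>T - {t}. r dvd j * (y t - y l))"
        using r_prime fT by (simp add: prime_dvd_mult_iff prime_dvd_prod_iff)
      then show False
        using c j_cop r_prime y_dist[OF tm] T by (auto simp: prime_dvd_mult_iff)
    qed
    have "Z0 r (a * a - [:- y t, 1:] * h * (b * b))"
      using h by (simp add: ab Gh mult.assoc Z0_def)
    then have "Z0 r b" by (rule base_nonsquare[OF r_prime hy])
    then show ?thesis by (simp add: ab Z0_def)
  qed
  show ?case using D S by blast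
next
  case (Suc k)
  have km: "k < m" "k \<le> m" using Suc.prems by auto
  have Dk: "\<And>x z. wf k x \<Longrightarrow> wf k z \<Longrightarrow> Zr r (mmul F k x z) \<Longrightarrow> Zr r x \<or> Zr r z"
    using Suc.IH km by blast
  have Sk: "\<And>T c A Bv. T \<subseteq> {k..<m} \<Longrightarrow> T \<noteq> {} \<Longrightarrow> \<not> r dvd c \<Longrightarrow> wf k A \<Longrightarrow> wf k Bv \<Longrightarrow>
        Zr r (madd (mmul F k A A) (mneg (msc (G T c) (mmul F k Bv Bv)))) \<Longrightarrow> Zr r Bv"
    using Suc.IH km by blast
  let ?f = "F k"
  note Fnz = Fnz_all[of k]
  have normnz: "Zr r c \<and> Zr r d" if w: "wf k c" "wf k d"
      and z: "Zr r (madd (mmul F k c c) (mneg (msc ?f (mmul F k d d))))" for c d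
  proof -
    have zd: "Zr r d" using Sk[of "{k}" 1 c d] km z w r_gt2 by simp
    have id: "mmul F k c c = madd (madd (mmul F k c c) (mneg (msc ?f (mmul F k d d)))) (msc ?f (mmul F k d d))"
      by (rule mf_eqI[OF Fnz]) (use w in simp_all)
    have "Zr r (mmul F k c c)"
      by (subst id) (intro Zr_madd[of k] Zr_msc[of k] Zr_mmul1[of k] wf_madd wf_mneg wf_msc wf_mmul z zd w)
    then have "Zr r c" using Dk w by blast
    then show ?thesis using zd by simp
  qed
  have D: "Zr r x \<or> Zr r z" if w0: "wf (Suc k) x" "wf (Suc k) z" and h: "Zr r (mmul F (Suc k) x z)" for x z
  proof (rule ccontr)
    assume nz: "\<not> (Zr r x \<or> Zr r z)"
    obtain a b where x: "x = N a b" "wf k a" "wf k b" using w0 by (auto elim!: wfES)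
    obtain c d where z: "z = N c d" "wf k c" "wf k d" using w0 by (auto elim!: wfES)
    note w = x(2,3) z(2,3)
    define Nn where "Nn = madd (mmul F k c c) (mneg (msc ?f (mmul F k d d)))"
    define U1 where "U1 = madd (mmul F k a c) (msc ?f (mmul F k b d))"
    define U2 where "U2 = madd (mmul F k a d) (mmul F k b c)"
    have zU: "Zr r U1" "Zr r U2" using h by (simp_all add: x z U1_def U2_def)
    have nN: "\<not> Zr r Nn" using normnz[OF w(3,4)] nz z by (auto simp: Nn_def)
    have id1: "mmul F k a Nn = madd (mmul F k U1 c) (mneg (msc ?f (mmul F k U2 d)))"
      by (rule mf_eqI[OF Fnz]) (use w in \<open>simp_all add: Nn_def U1_def U2_def algebra_simps\<close>)
    have id2: "mmul F k b Nn = madd (mmul F k U2 c) (mneg (mmul F k U1 d))"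
      by (rule mf_eqI[OF Fnz]) (use w in \<open>simp_all add: Nn_def U1_def U2_def algebra_simps\<close>)
    have wU: "wf k U1" "wf k U2" "wf k Nn" using w by (simp_all add: U1_def U2_def Nn_def)
    have "Zr r (mmul F k a Nn)" unfolding id1
      using w wU zU by (intro Zr_madd[of k] Zr_mneg[of k, THEN iffD2] Zr_msc[of k] Zr_mmul1[of k] wf_madd wf_mneg wf_msc wf_mmul) simp_all
    then have za: "Zr r a" using Dk w wU nN by blast
    have "Zr r (mmul F k b Nn)" unfolding id2
      using w wU zU by (intro Zr_madd[of k] Zr_mneg[of k, THEN iffD2] Zr_msc[of k] Zr_mmul1[of k] wf_madd wf_mneg wf_msc wf_mmul) simp_all
    then have zb: "Zr r b" using Dk w wU nN by blast
    show False using nz za zb x by simp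
  qed
  have S: "Zr r Bv" if T: "T \<subseteq> {Suc k..<m}" "T \<noteq> {}" and cc: "\<not> r dvd c0" and w0: "wf (Suc k) A" "wf (Suc k) Bv"
    and h: "Zr r (madd (mmul F (Suc k) A A) (mneg (msc (G T c0) (mmul F (Suc k) Bv Bv))))" for T c0 A Bv
  proof -
    obtain a b where x: "A = N a b" "wf k a" "wf k b" using w0 by (auto elim!: wfES)
    obtain c d where z: "Bv = N c d" "wf k c" "wf k d" using w0 by (auto elim!: wfES)
    note w = x(2,3) z(2,3)
    define g where "g = G T c0"
    have fT: "finite T" using T finite_subset by blast
    have kT: "k \<notin> T" using T by auto
    define E1 where "E1 = madd (madd (mmul F k a a) (msc ?f (mmul F k b b))) (mneg (msc g (madd (mmul F k c c) (msc ?f (mmul F k d d)))))"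
    define E2 where "E2 = madd (mmul F k a b) (mneg (msc g (mmul F k c d)))"
    define p where "p = madd (mmul F k a c) (mneg (msc ?f (mmul F k b d)))"
    define q where "q = madd (mmul F k b c) (mneg (mmul F k a d))"
    define W where "W = madd (mmul F k c c) (msc ?f (mmul F k d d))"
    define Nn where "Nn = madd (mmul F k c c) (mneg (msc ?f (mmul F k d d)))"
    define R1 where "R1 = madd (madd (mmul F k p p) (msc ?f (mmul F k q q))) (mneg (msc g (mmul F k Nn Nn)))"
    have wE: "wf k E1" "wf k E2" "wf k p" "wf k q" "wf k W" "wf k Nn" "wf k R1"
      using w by (simp_all add: E1_def E2_def p_def q_def W_def Nn_def R1_def)
    have zE1: "Zr r E1" using h by (simp add: x z E1_def g_def)
    have "Zr r (madd (madd (mmul F k a b) (mmul F k b a)) (mneg (msc g (madd (mmul F k c d) (mmul F k d c)))))"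
      using h by (simp add: x z g_def)
    moreover have "madd (madd (mmul F k a b) (mmul F k b a)) (mneg (msc g (madd (mmul F k c d) (mmul F k d c)))) = madd E2 E2"
      by (rule mf_eqI[OF Fnz]) (use w in \<open>simp_all add: E2_def algebra_simps\<close>)
    ultimately have zE2: "Zr r E2" using Zr_double[OF r_prime r_gt2 wE(2)] by simp
    have id1: "mmul F k p q = madd (mmul F k E2 W) (mneg (mmul F k (mmul F k c d) E1))"
      by (rule mf_eqI[OF Fnz]) (use w wE in \<open>simp_all add: E1_def E2_def p_def q_def W_def algebra_simps\<close>)
    have "Zr r (mmul F k p q)" unfolding id1
      using w wE zE1 zE2 by (intro Zr_madd[of k] Zr_mneg[of k, THEN iffD2] Zr_mmul1[of k] Zr_mmul2[of k] wf_madd wf_mneg wf_msc wf_mmul) simp_all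
    then have pq: "Zr r p \<or> Zr r q" using Dk wE by blast
    have id2: "R1 = madd (mmul F k E1 W) (mneg (msc (Polynomial.smult 4 ?f) (mmul F k (mmul F k c d) E2)))"
      by (rule mf_eqI[OF Fnz]) (use w wE in \<open>simp_all add: R1_def E1_def E2_def p_def q_def W_def Nn_def algebra_simps power2_eq_square\<close>)
    have zR1: "Zr r R1" unfolding id2
      using w wE zE1 zE2 by (intro Zr_madd[of k] Zr_mneg[of k, THEN iffD2] Zr_msc[of k] Zr_mmul1[of k] Zr_mmul2[of k] wf_madd wf_mneg wf_msc wf_mmul) simp_all
    have zN: "Zr r Nn"
    proof (cases "Zr r q")
      case True
      have id3: "madd (mmul F k p p) (mneg (msc g (mmul F k Nn Nn))) = madd R1 (mneg (msc ?f (mmul F k q q)))"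
        by (rule mf_eqI[OF Fnz]) (use w wE in \<open>simp_all add: R1_def algebra_simps\<close>)
      have "Zr r (madd (mmul F k p p) (mneg (msc g (mmul F k Nn Nn))))" unfolding id3
        using w wE zR1 True by (intro Zr_madd[of k] Zr_mneg[of k, THEN iffD2] Zr_msc[of k] Zr_mmul1[of k] wf_madd wf_mneg wf_msc wf_mmul) simp_all
      moreover have "T \<subseteq> {k..<m}" using T(1) by auto
      ultimately show ?thesis using Sk[of T c0 p Nn] T(2) cc wE by (simp add: g_def)
    next
      case False
      then have zp: "Zr r p" using pq by simp
      have Gi: "G (insert k T) c0 = ?f * g" using G_insert[OF fT kT] by (simp add: g_def)
      have id4: "madd (mmul F k (msc ?f q) (msc ?f q)) (mneg (msc (G (insert k T) c0) (mmul F k Nn Nn))) = madd (msc ?f R1) (mneg (msc ?f (mmul F k p p)))"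
        by (rule mf_eqI[OF Fnz]) (use w wE in \<open>simp_all add: Gi R1_def algebra_simps\<close>)
      have "Zr r (madd (mmul F k (msc ?f q) (msc ?f q)) (mneg (msc (G (insert k T) c0) (mmul F k Nn Nn))))" unfolding id4
        using w wE zR1 zp by (intro Zr_madd[of k] Zr_mneg[of k, THEN iffD2] Zr_msc[of k] Zr_mmul1[of k] wf_madd wf_mneg wf_msc wf_mmul) simp_all
      moreover have "insert k T \<subseteq> {k..<m}" using T(1) km by auto
      ultimately show ?thesis using Sk[of "insert k T" c0 "msc ?f q" Nn] cc wE by simp
    qed
    then have "Zr r c \<and> Zr r d" using normnz[OF w(3,4)] by (simp add: Nn_def)
    then show ?thesis by (simp add: z)
  qed
  show ?case using D S by blast
qed


lemma RC:
  "k \<le> m \<Longrightarrow> wf k P \<Longrightarrow> \<not> Zr r P \<Longrightarrow> mdeg P \<le> d \<Longrightarrow>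
   card {x\<in>{0..<r}. \<exists>s. (\<forall>l<k. r dvd (s l ^ 2 - poly (F l) x)) \<and> r dvd ev x s k P} \<le> bd k d"
proof (induction k arbitrary: P d)
  case 0
  obtain p where p: "P = B p" using 0 by (auto elim!: wfE0)
  have "\<not> Z0 r p" using 0 p by (simp add: Z0_def)
  then have "card {x\<in>{0..<r}. r dvd poly p x} \<le> degree p" by (rule poly_root_count[OF r_prime])
  then show ?case using 0 p by simp
next
  case (Suc k)
  have km: "k < m" "k \<le> m" using Suc.prems by auto
  obtain A Bv where P: "P = N A Bv" and w: "wf k A" "wf k Bv" using Suc.prems by (auto elim!: wfES)
  have Dk: "\<And>x z. wf k x \<Longrightarrow> wf k z \<Longrightarrow> Zr r (mmul F k x z) \<Longrightarrow> Zr r x \<or> Zr r z"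
    using DS[OF km(2)] by blast
  have Sk: "\<And>T c A Bv. T \<subseteq> {k..<m} \<Longrightarrow> T \<noteq> {} \<Longrightarrow> \<not> r dvd c \<Longrightarrow> wf k A \<Longrightarrow> wf k Bv \<Longrightarrow>
        Zr r (madd (mmul F k A A) (mneg (msc (G T c) (mmul F k Bv Bv)))) \<Longrightarrow> Zr r Bv"
    using DS[OF km(2)] by blast
  define Q where "Q = madd (mmul F k A A) (mneg (msc (F k) (mmul F k Bv Bv)))"
  have wQ: "wf k Q" using w by (simp add: Q_def)
  have nQ: "\<not> Zr r Q"
  proof
    assume zQ: "Zr r Q"
    then have zB: "Zr r Bv" using Sk[of "{k}" 1 A Bv] km w r_gt2 by (simp add: Q_def)
    have id: "mmul F k A A = madd Q (msc (F k) (mmul F k Bv Bv))"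
      by (rule mf_eqI[OF Fnz_all[of k]]) (use w in \<open>simp_all add: Q_def\<close>)
    have "Zr r (mmul F k A A)" unfolding id using w zQ zB wQ
      by (intro Zr_madd[of k] Zr_msc[of k] Zr_mmul1[of k] wf_msc wf_mmul) simp_all
    then have "Zr r A" using Dk w by blast
    then show False using Suc.prems(3) zB P by simp
  qed
  have dQ: "mdeg Q \<le> 2 * d + k + 1"
  proof -
    have "mdeg (mmul F k A A) \<le> 2 * d + k" using mdeg_mmul[OF _ w(1) w(1), of F] degree_F Suc.prems(4) P by force
    moreover have "mdeg (msc (F k) (mmul F k Bv Bv)) \<le> 2 * d + k + 1"
    proof -
      have "mdeg (mmul F k Bv Bv) \<le> mdeg Bv + mdeg Bv + k" using mdeg_mmul[OF _ w(2) w(2), of F] degree_F by blast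
      moreover have "mdeg (msc (F k) (mmul F k Bv Bv)) \<le> degree (F k) + mdeg (mmul F k Bv Bv)"
        by (rule mdeg_msc[of k]) (simp add: w)
      moreover have "mdeg Bv \<le> d" using Suc.prems(4) P by simp
      ultimately show ?thesis using degree_F[of k] by linarith
    qed
    moreover have "mdeg (mneg (msc (F k) (mmul F k Bv Bv))) = mdeg (msc (F k) (mmul F k Bv Bv))"
      by (rule mdeg_mneg[of k]) (simp add: w)
    ultimately show ?thesis using mdeg_madd[of k "mmul F k A A" "mneg (msc (F k) (mmul F k Bv Bv))"] w
      unfolding Q_def by simp
  qed
  have sub: "{x\<in>{0..<r}. \<exists>s. (\<forall>l<Suc k. r dvd (s l ^ 2 - poly (F l) x)) \<and> r dvd ev x s (Suc k) P}
      \<subseteq> {x\<in>{0..<r}. \<exists>s. (\<forall>l<k. r dvd (s l ^ 2 - poly (F l) x)) \<and> r dvd ev x s k Q}"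
  proof
    fix x assume "x \<in> {x\<in>{0..<r}. \<exists>s. (\<forall>l<Suc k. r dvd (s l ^ 2 - poly (F l) x)) \<and> r dvd ev x s (Suc k) P}"
    then obtain s where x: "x \<in> {0..<r}" and v: "\<forall>l<Suc k. r dvd (s l ^ 2 - poly (F l) x)"
      and e: "r dvd ev x s (Suc k) P" by blast
    have v': "\<forall>l<k. r dvd (s l ^ 2 - poly (F l) x)" using v by auto
    have fk: "r dvd (s k ^ 2 - poly (F k) x)" using v by auto
    let ?a = "ev x s k A" and ?b = "ev x s k Bv"
    have e': "r dvd ?a + s k * ?b" using e by (simp add: P)
    have m1: "r dvd ev x s k (mmul F k A A) - ?a * ?a" by (rule ev_mmul_mod[OF v' w(1) w(1)])
    have m2: "r dvd ev x s k (mmul F k Bv Bv) - ?b * ?b" by (rule ev_mmul_mod[OF v' w(2) w(2)])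
    have eq: "ev x s k Q = (ev x s k (mmul F k A A) - ?a * ?a) - poly (F k) x * (ev x s k (mmul F k Bv Bv) - ?b * ?b)
       + (?a + s k * ?b) * (?a - s k * ?b) + ?b * ?b * (s k ^ 2 - poly (F k) x)"
      using w by (simp add: Q_def algebra_simps power2_eq_square)
    have "r dvd ev x s k Q" unfolding eq
      by (intro dvd_add dvd_diff dvd_mult m1 m2 e' fk dvd_mult2)
    then show "x \<in> {x\<in>{0..<r}. \<exists>s. (\<forall>l<k. r dvd (s l ^ 2 - poly (F l) x)) \<and> r dvd ev x s k Q}" using x v' by blast
  qed
  have "card {x\<in>{0..<r}. \<exists>s. (\<forall>l<Suc k. r dvd (s l ^ 2 - poly (F l) x)) \<and> r dvd ev x s (Suc k) P}
      \<le> card {x\<in>{0..<r}. \<exists>s. (\<forall>l<k. r dvd (s l ^ 2 - poly (F l) x)) \<and> r dvd ev x s k Q}"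
    by (rule card_mono[OF _ sub]) (auto intro: finite_subset[of _ "{0..<r}"])
  also have "\<dots> \<le> bd k (2 * d + k + 1)" using Suc.IH[OF km(2) wQ nQ dQ] .
  finally show ?case by simp
qed

lemma key:
  assumes "0 < m" "\<forall>l<m. \<not> r dvd e l"
  shows "card {x\<in>{0..<r}. \<exists>s. (\<forall>l<m. r dvd (s l ^ 2 - j * (x - y l))) \<and> r dvd (\<Sum>l<m. e l * s l)} \<le> bd m 0"
proof -
  obtain m' where m': "m = Suc m'" using assms(1) by (cases m) auto
  have "\<not> r dvd e m'" using assms(2) m' by simp
  then have "\<not> (\<forall>i. r dvd Polynomial.coeff [:e m':] i)" by (metis coeff_pCons_0)
  then have nz: "\<not> Zr r (lin e m)" by (simp add: m')
  have "card {x\<in>{0..<r}. \<exists>s. (\<forall>l<m. r dvd (s l ^ 2 - poly (F l) x)) \<and> r dvd ev x s m (lin e m)} \<le> bd m 0"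
    by (rule RC) (simp_all add: nz)
  then show ?thesis by (simp add: poly_F ev_lin)
qed

end




lemma ee_add: "ee (x + y) = ee x * ee y"
  by (simp add: ee_def algebra_simps exp_add[symmetric])

lemma ee_0[simp]: "ee 0 = 1" by (simp add: ee_def)

lemma ee_sum: "ee (\<Sum>i\<in>A. f i) = (\<Prod>i\<in>A. ee (f i))"
  by (induction A rule: infinite_finite_induct) (simp_all add: ee_add)

lemma cnj_ee: "cnj (ee x) = ee (- x)"
  by (simp add: ee_def exp_cnj)

lemma norm_ee[simp]: "norm (ee x) = 1"
  by (simp add: ee_def norm_exp_eq_Re)




lemma ee_eq_1_iff: "ee x = 1 \<longleftrightarrow> x \<in> \<int>"
proof -
  have "ee x = 1 \<longleftrightarrow> (\<exists>n::int. 2 * pi * x = of_int (2 * n) * pi)"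
    by (simp add: ee_def exp_eq_1)
  also have "\<dots> \<longleftrightarrow> (\<exists>n::int. x = of_int n)" by auto
  also have "\<dots> \<longleftrightarrow> x \<in> \<int>" by (auto elim: Ints_cases)
  finally show ?thesis .
qed

lemma ee_int: "ee (real_of_int k) = 1" by (simp add: ee_eq_1_iff)

lemma ee_mult_nat: "ee (real a * t) = ee t ^ a"
  by (induction a) (simp_all add: ee_add algebra_simps)

lemma sum_ee_roots:
  fixes r :: nat and D :: int
  assumes "0 < r"
  shows "(\<Sum>a\<in>{0..<int r}. ee (real_of_int (a * D) / real r)) = (if int r dvd D then of_nat r else 0)"
proof -
  define w where "w = ee (real_of_int D / real r)"
  have "(\<Sum>a\<in>{0..<int r}. ee (real_of_int (a * D) / real r)) = (\<Sum>a\<in>int ` {..<r}. ee (real_of_int (a * D) / real r))"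
    by (simp add: image_atLeastZeroLessThan_int)
  also have "\<dots> = (\<Sum>a<r. ee (real_of_int (int a * D) / real r))"
    by (subst sum.reindex) (auto simp: inj_on_def)
  also have "\<dots> = (\<Sum>a<r. w ^ a)"
    by (intro sum.cong refl) (simp add: w_def ee_mult_nat[symmetric] algebra_simps)
  also have "\<dots> = (if int r dvd D then of_nat r else 0)"
  proof (cases "int r dvd D")
    case True
    then obtain t where "D = int r * t" by auto
    then have "w = 1" using assms by (simp add: w_def ee_int)
    then show ?thesis using True by simp
  next
    case False
    have "w \<noteq> 1"
    proof
      assume "w = 1"
      then have "real_of_int D / real r \<in> \<int>" by (simp add: w_def ee_eq_1_iff)
      then obtain t where "real_of_int D / real r = of_int t" by (auto elim: Ints_cases)
      then have "real_of_int D = real_of_int (int r * t)" using assms by (simp add: field_simps)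
      then have "D = int r * t" by linarith
      then show False using False by simp
    qed
    moreover have "w ^ r = 1"
      using assms by (simp add: w_def ee_mult_nat[symmetric] ee_int)
    ultimately show ?thesis using False by (simp add: geometric_sum)
  qed
  finally show ?thesis .
qed

lemma fourier_bound:
  fixes X :: "(nat \<times> int) set" and r :: nat and \<xi> :: real
  assumes fin: "finite X" and r0: "0 < r"
  shows "(\<Sum>a\<in>{0..<int r}. cmod (\<Sum>x\<in>X. ee (real_of_int (a * snd x) / real r + \<xi> * real (fst x))) ^ (2 * n))
     \<le> real r * real (card {(g, h). g \<in> PiE {..<n} (\<lambda>_. X) \<and> h \<in> PiE {..<n} (\<lambda>_. X) \<and>
            int r dvd (\<Sum>i<n. snd (g i)) - (\<Sum>i<n. snd (h i))})"
proof -
  define P where "P = PiE {..<n} (\<lambda>_. X)"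
  have finP: "finite P" using fin by (simp add: P_def finite_PiE)
  define \<phi> where "\<phi> a x = ee (real_of_int (a * snd x) / real r + \<xi> * real (fst x))" for a :: int and x :: "nat \<times> int"
  define D where "D gh = (\<Sum>i<n. snd (fst gh i)) - (\<Sum>i<n. snd (snd gh i))" for gh :: "(nat \<Rightarrow> nat \<times> int) \<times> (nat \<Rightarrow> nat \<times> int)"
  define E where "E gh = (\<Sum>i<n. real (fst (fst gh i))) - (\<Sum>i<n. real (fst (snd gh i)))" for gh :: "(nat \<Rightarrow> nat \<times> int) \<times> (nat \<Rightarrow> nat \<times> int)"
  have step: "complex_of_real (cmod (\<Sum>x\<in>X. \<phi> a x) ^ (2 * n)) =
      (\<Sum>gh\<in>P \<times> P. ee (real_of_int (a * D gh) / real r) * ee (\<xi> * E gh))" for a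
  proof -
    let ?S = "\<Sum>x\<in>X. \<phi> a x"
    have ns: "complex_of_real ((cmod ?S)\<^sup>2) = ?S * cnj ?S" by (rule complex_norm_square)
    have "complex_of_real (cmod ?S ^ (2 * n)) = complex_of_real (((cmod ?S)\<^sup>2) ^ n)"
      by (simp only: power_mult)
    also have "\<dots> = (complex_of_real ((cmod ?S)\<^sup>2)) ^ n" by (rule of_real_power)
    also have "\<dots> = (?S * cnj ?S) ^ n" by (simp only: ns)
    also have "\<dots> = (\<Prod>i<n. ?S) * (\<Prod>i<n. (\<Sum>x\<in>X. cnj (\<phi> a x)))"
      by (simp add: power_mult_distrib)
    also have "(\<Prod>i<n. ?S) = (\<Sum>g\<in>P. \<Prod>i<n. \<phi> a (g i))"
      unfolding P_def by (rule prod_sum_PiE) (simp_all add: fin)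
    also have "(\<Prod>i<n. (\<Sum>x\<in>X. cnj (\<phi> a x))) = (\<Sum>h\<in>P. \<Prod>i<n. cnj (\<phi> a (h i)))"
      unfolding P_def by (rule prod_sum_PiE) (simp_all add: fin)
    also have "(\<Sum>g\<in>P. \<Prod>i<n. \<phi> a (g i)) * (\<Sum>h\<in>P. \<Prod>i<n. cnj (\<phi> a (h i)))
        = (\<Sum>gh\<in>P \<times> P. (\<Prod>i<n. \<phi> a (fst gh i)) * (\<Prod>i<n. cnj (\<phi> a (snd gh i))))"
      by (simp add: sum_product sum.cartesian_product case_prod_beta)
    also have "\<dots> = (\<Sum>gh\<in>P \<times> P. ee (real_of_int (a * D gh) / real r) * ee (\<xi> * E gh))"
    proof (intro sum.cong refl)
      fix gh :: "(nat \<Rightarrow> nat \<times> int) \<times> (nat \<Rightarrow> nat \<times> int)"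
      have "(\<Prod>i<n. \<phi> a (fst gh i)) * (\<Prod>i<n. cnj (\<phi> a (snd gh i)))
          = ee ((\<Sum>i<n. real_of_int (a * snd (fst gh i)) / real r + \<xi> * real (fst (fst gh i))) +
                - (\<Sum>i<n. real_of_int (a * snd (snd gh i)) / real r + \<xi> * real (fst (snd gh i))))"
      proof -
        have g1: "(\<Prod>i<n. \<phi> a (fst gh i)) = ee (\<Sum>i<n. real_of_int (a * snd (fst gh i)) / real r + \<xi> * real (fst (fst gh i)))"
          by (simp only: \<phi>_def ee_sum)
        have h1: "(\<Prod>i<n. cnj (\<phi> a (snd gh i))) = ee (- (\<Sum>i<n. real_of_int (a * snd (snd gh i)) / real r + \<xi> * real (fst (snd gh i))))"
          by (simp only: \<phi>_def cnj_ee sum_negf[symmetric] ee_sum)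
        show ?thesis by (simp only: g1 h1 ee_add)
      qed
      also have "\<dots> = ee (real_of_int (a * D gh) / real r + \<xi> * E gh)"
        by (rule arg_cong[where f = ee])
           (simp add: D_def E_def sum.distrib sum_subtractf sum_divide_distrib[symmetric] sum_distrib_left algebra_simps diff_divide_distrib)
      finally show "(\<Prod>i<n. \<phi> a (fst gh i)) * (\<Prod>i<n. cnj (\<phi> a (snd gh i))) =
          ee (real_of_int (a * D gh) / real r) * ee (\<xi> * E gh)" by (simp add: ee_add)
    qed
    finally show ?thesis .
  qed
  define CS where "CS = {gh \<in> P \<times> P. int r dvd D gh}"
  have "complex_of_real (\<Sum>a\<in>{0..<int r}. cmod (\<Sum>x\<in>X. \<phi> a x) ^ (2 * n))
      = (\<Sum>a\<in>{0..<int r}. \<Sum>gh\<in>P \<times> P. ee (real_of_int (a * D gh) / real r) * ee (\<xi> * E gh))"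
    unfolding of_real_sum by (rule sum.cong[OF refl step])
  also have "\<dots> = (\<Sum>gh\<in>P \<times> P. (\<Sum>a\<in>{0..<int r}. ee (real_of_int (a * D gh) / real r)) * ee (\<xi> * E gh))"
    by (simp add: sum.swap[of _ "{0..<int r}"] sum_distrib_right)
  also have "\<dots> = (\<Sum>gh\<in>P \<times> P. (if int r dvd D gh then of_nat r else 0) * ee (\<xi> * E gh))"
    by (rule sum.cong[OF refl]) (simp only: sum_ee_roots[OF r0])
  finally have eq: "complex_of_real (\<Sum>a\<in>{0..<int r}. cmod (\<Sum>x\<in>X. \<phi> a x) ^ (2 * n))
      = (\<Sum>gh\<in>P \<times> P. (if int r dvd D gh then of_nat r else 0) * ee (\<xi> * E gh))" .
  have "(\<Sum>a\<in>{0..<int r}. cmod (\<Sum>x\<in>X. \<phi> a x) ^ (2 * n))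
      = cmod (complex_of_real (\<Sum>a\<in>{0..<int r}. cmod (\<Sum>x\<in>X. \<phi> a x) ^ (2 * n)))"
  proof -
    have "0 \<le> (\<Sum>a\<in>{0..<int r}. cmod (\<Sum>x\<in>X. \<phi> a x) ^ (2 * n))" by (simp add: sum_nonneg)
    then show ?thesis by (simp only: norm_of_real abs_of_nonneg)
  qed
  also have "\<dots> \<le> (\<Sum>gh\<in>P \<times> P. cmod ((if int r dvd D gh then of_nat r else 0) * ee (\<xi> * E gh)))"
    unfolding eq by (rule norm_sum)
  also have "\<dots> = (\<Sum>gh\<in>P \<times> P. if int r dvd D gh then real r else 0)"
    by (intro sum.cong refl) (simp add: norm_mult)
  also have "\<dots> = real r * real (card CS)"
    by (simp add: sum.If_cases finP CS_def Int_def)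
  also have "CS = {(g, h). g \<in> PiE {..<n} (\<lambda>_. X) \<and> h \<in> PiE {..<n} (\<lambda>_. X) \<and>
            int r dvd (\<Sum>i<n. snd (g i)) - (\<Sum>i<n. snd (h i))}"
    unfolding CS_def P_def D_def by (simp only: set_eq_iff mem_Collect_eq mem_Times_iff case_prod_beta) blast
  finally show ?thesis by (simp add: \<phi>_def)
qed





definition KK :: "nat \<Rightarrow> int \<Rightarrow> int \<Rightarrow> nat \<Rightarrow> int set" where
  "KK r j b v = {k\<in>{0..<int r}. [k^2 = j * (b - int v)] (mod int r)}"

definition rho :: "nat \<Rightarrow> int \<Rightarrow> int \<Rightarrow> nat \<Rightarrow> int" where
  "rho r j b v = Min (KK r j b v)"

lemma finite_KK[simp]: "finite (KK r j b v)"
  by (rule finite_subset[of _ "{0..<int r}"]) (auto simp: KK_def)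

lemma rho_in: "KK r j b v \<noteq> {} \<Longrightarrow> rho r j b v \<in> KK r j b v"
  by (simp add: rho_def)

lemma KK_dvd: "k \<in> KK r j b v \<Longrightarrow> int r dvd k^2 - j * (b - int v)"
  by (simp add: KK_def cong_iff_dvd_diff)

lemma KK_range: "k \<in> KK r j b v \<Longrightarrow> 0 \<le> k \<and> k < int r"
  by (simp add: KK_def)

lemma two_roots:
  assumes "prime (int r)" "k \<in> KK r j b v" "k' \<in> KK r j b v"
  shows "k = k' \<or> int r dvd k + k'"
proof -
  have "int r dvd (k^2 - j * (b - int v)) - (k'^2 - j * (b - int v))"
    using KK_dvd[OF assms(2)] KK_dvd[OF assms(3)] by (rule dvd_diff)
  then have "int r dvd (k - k') * (k + k')" by (simp add: algebra_simps power2_eq_square)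
  then have "int r dvd k - k' \<or> int r dvd k + k'" using assms(1) by (simp add: prime_dvd_mult_iff)
  moreover have "int r dvd k - k' \<Longrightarrow> k = k'"
  proof -
    assume "int r dvd k - k'"
    then have "k mod int r = k' mod int r" by (simp add: mod_eq_dvd_iff)
    then show "k = k'" using KK_range[OF assms(2)] KK_range[OF assms(3)] by simp
  qed
  ultimately show ?thesis by blast
qed

lemma card_group:
  assumes "finite S" "finite T" "f ` S \<subseteq> T"
  shows "card S = (\<Sum>t\<in>T. card {x\<in>S. f x = t})"
proof -
  have "card S = (\<Sum>x\<in>S. 1::nat)" by simp
  also have "\<dots> = (\<Sum>t\<in>T. \<Sum>x\<in>{x\<in>S. f x = t}. 1)" using sum.group[OF assms, of "\<lambda>_. 1::nat"] by simp
  also have "\<dots> = (\<Sum>t\<in>T. card {x\<in>S. f x = t})" by simp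
  finally show ?thesis .
qed

lemma double_count:
  assumes "finite A" "finite BB"
  shows "(\<Sum>a\<in>A. card {b\<in>BB. P a b}) = (\<Sum>b\<in>BB. card {a\<in>A. P a b})"
proof -
  have "(\<Sum>a\<in>A. card {b\<in>BB. P a b}) = (\<Sum>a\<in>A. \<Sum>b\<in>BB. if P a b then 1 else 0)"
    using assms by (simp add: sum.If_cases Int_def)
  also have "\<dots> = (\<Sum>b\<in>BB. \<Sum>a\<in>A. if P a b then 1 else 0)" by (rule sum.swap)
  also have "\<dots> = (\<Sum>b\<in>BB. card {a\<in>A. P a b})"
    using assms by (simp add: sum.If_cases Int_def)
  finally show ?thesis .
qed

lemma abs_sum_signs:
  assumes "\<forall>i\<in>A. \<sigma> i \<in> {1::int, -1}" "finite A"
  shows "\<bar>\<Sum>i\<in>A. \<sigma> i\<bar> \<le> int (card A)"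
proof -
  have "\<bar>\<Sum>i\<in>A. \<sigma> i\<bar> \<le> (\<Sum>i\<in>A. \<bar>\<sigma> i\<bar>)" by (rule sum_abs)
  also have "\<dots> = (\<Sum>i\<in>A. 1)" using assms by (intro sum.cong) auto
  finally show ?thesis by simp
qed


lemma regroup:
  fixes wg :: "nat \<Rightarrow> nat" and \<sigma> :: "nat \<Rightarrow> int" and \<rho> :: "nat \<Rightarrow> int"
  assumes "finite Y" "wg ` {..<n} \<subseteq> Y"
  shows "(\<Sum>y\<in>Y. (\<Sum>i\<in>{i. i < n \<and> wg i = y}. \<sigma> i) * \<rho> y) = (\<Sum>i<n. \<sigma> i * \<rho> (wg i))"
proof -
  have "(\<Sum>i<n. \<sigma> i * \<rho> (wg i)) = (\<Sum>y\<in>Y. \<Sum>i\<in>{x\<in>{..<n}. wg x = y}. \<sigma> i * \<rho> (wg i))"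
    using sum.group[of "{..<n}" Y wg "\<lambda>i. \<sigma> i * \<rho> (wg i)"] assms by simp
  also have "\<dots> = (\<Sum>y\<in>Y. (\<Sum>i\<in>{i. i < n \<and> wg i = y}. \<sigma> i) * \<rho> y)"
    by (intro sum.cong refl) (auto simp: sum_distrib_right)
  finally show ?thesis by simp
qed

lemma nondeg_bound:
  fixes r n :: nat and j :: int and Vt :: "nat set" and wg wh :: "nat \<Rightarrow> nat" and \<sigma>g \<sigma>h :: "nat \<Rightarrow> int"
  defines "Ef \<equiv> \<lambda>y. (\<Sum>i\<in>{i. i < n \<and> wg i = y}. \<sigma>g i) - (\<Sum>i\<in>{i. i < n \<and> wh i = y}. \<sigma>h i)"
  assumes pr: "prime (int r)" and r2: "2 * n + 2 < r" and jc: "\<not> int r dvd j"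
    and Vt: "\<forall>v\<in>Vt. 0 < v \<and> v < r"
    and wg: "\<forall>i<n. wg i \<in> Vt" and wh: "\<forall>i<n. wh i \<in> Vt"
    and sg: "\<forall>i<n. \<sigma>g i \<in> {1,-1}" and sh: "\<forall>i<n. \<sigma>h i \<in> {1,-1}"
    and nd: "\<exists>y \<in> wg ` {..<n} \<union> wh ` {..<n}. Ef y \<noteq> 0"
  shows "card {b\<in>{0..<int r}. (\<forall>i<n. KK r j b (wg i) \<noteq> {}) \<and> (\<forall>i<n. KK r j b (wh i) \<noteq> {}) \<and>
      int r dvd (\<Sum>i<n. \<sigma>g i * rho r j b (wg i)) - (\<Sum>i<n. \<sigma>h i * rho r j b (wh i))} \<le> (\<Sum>m\<le>2*n. bd m 0)"
proof -
  define Y where "Y = wg ` {..<n} \<union> wh ` {..<n}"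
  define Y' where "Y' = {y\<in>Y. Ef y \<noteq> 0}"
  define ys where "ys = sorted_list_of_set Y'"
  define m where "m = length ys"
  have finY: "finite Y" by (simp add: Y_def)
  have finY': "finite Y'" using finY by (simp add: Y'_def)
  have setys: "set ys = Y'" and dys: "distinct ys" using finY' by (simp_all add: ys_def)
  have mc: "m = card Y'" using dys setys by (metis m_def distinct_card)
  have YVt: "Y \<subseteq> Vt" using wg wh by (auto simp: Y_def)
  have m0: "0 < m" using nd finY' by (auto simp: mc Y'_def Y_def card_gt_0_iff)
  have m2: "m \<le> 2 * n"
  proof -
    have "card Y' \<le> card Y" using finY by (auto simp: Y'_def intro: card_mono)
    also have "\<dots> \<le> card (wg ` {..<n}) + card (wh ` {..<n})" unfolding Y_def by (rule card_Un_le)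
    also have "\<dots> \<le> n + n" using card_image_le[of "{..<n}" wg] card_image_le[of "{..<n}" wh] by simp
    finally show ?thesis by (simp add: mc)
  qed
  have ysin: "ys ! l \<in> Y'" if "l < m" for l using that setys by (auto simp: m_def)
  have Efbound: "\<bar>Ef y\<bar> \<le> 2 * int n" for y
  proof -
    have fin1: "finite {i. i < n \<and> wg i = y}" and fin2: "finite {i. i < n \<and> wh i = y}" by auto
    have c1: "card {i. i < n \<and> wg i = y} \<le> n" using card_mono[of "{..<n}" "{i. i < n \<and> wg i = y}"] by auto
    have c2: "card {i. i < n \<and> wh i = y} \<le> n" using card_mono[of "{..<n}" "{i. i < n \<and> wh i = y}"] by auto
    have "\<bar>\<Sum>i\<in>{i. i < n \<and> wg i = y}. \<sigma>g i\<bar> \<le> int (card {i. i < n \<and> wg i = y})"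
      using sg fin1 by (intro abs_sum_signs) auto
    moreover have "\<bar>\<Sum>i\<in>{i. i < n \<and> wh i = y}. \<sigma>h i\<bar> \<le> int (card {i. i < n \<and> wh i = y})"
      using sh fin2 by (intro abs_sum_signs) auto
    ultimately show ?thesis using c1 c2 by (simp add: Ef_def abs_diff_le_iff) linarith
  qed
  interpret q: qsetup "int r" j "\<lambda>l. int (ys ! l)" m
  proof
    show "prime (int r)" by (rule pr)
    show "2 < int r" using r2 by simp
    show "\<not> int r dvd j" by (rule jc)
    fix l l' assume l: "l < m" "l' < m" "l \<noteq> l'"
    have ne: "ys ! l \<noteq> ys ! l'" using l dys by (simp add: m_def nth_eq_iff_index_eq)
    have "ys ! l \<in> Vt" "ys ! l' \<in> Vt" using ysin l YVt by (auto simp: Y'_def)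
    then have b: "0 < ys ! l" "ys ! l < r" "0 < ys ! l'" "ys ! l' < r" using Vt by auto
    show "\<not> int r dvd int (ys ! l) - int (ys ! l')"
    proof
      assume "int r dvd int (ys ! l) - int (ys ! l')"
      moreover have "int (ys ! l) - int (ys ! l') \<noteq> 0" using ne by simp
      ultimately have "\<bar>int r\<bar> \<le> \<bar>int (ys ! l) - int (ys ! l')\<bar>" by (rule dvd_imp_le_int[rotated])
      then show False using b by linarith
    qed
  qed
  have enz: "\<forall>l<m. \<not> int r dvd Ef (ys ! l)"
  proof (intro allI impI notI)
    fix l assume l: "l < m" and d: "int r dvd Ef (ys ! l)"
    have "Ef (ys ! l) \<noteq> 0" using ysin[OF l] by (simp add: Y'_def)
    then have "\<bar>int r\<bar> \<le> \<bar>Ef (ys ! l)\<bar>" using d by (rule dvd_imp_le_int)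
    then show False using Efbound[of "ys ! l"] r2 by linarith
  qed
  have K: "card {x\<in>{0..<int r}. \<exists>s. (\<forall>l<m. int r dvd (s l ^ 2 - j * (x - int (ys ! l)))) \<and>
           int r dvd (\<Sum>l<m. Ef (ys ! l) * s l)} \<le> bd m 0"
    by (rule q.key[OF m0 enz])
  have sub: "{b\<in>{0..<int r}. (\<forall>i<n. KK r j b (wg i) \<noteq> {}) \<and> (\<forall>i<n. KK r j b (wh i) \<noteq> {}) \<and>
      int r dvd (\<Sum>i<n. \<sigma>g i * rho r j b (wg i)) - (\<Sum>i<n. \<sigma>h i * rho r j b (wh i))}
     \<subseteq> {x\<in>{0..<int r}. \<exists>s. (\<forall>l<m. int r dvd (s l ^ 2 - j * (x - int (ys ! l)))) \<and>
           int r dvd (\<Sum>l<m. Ef (ys ! l) * s l)}"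
  proof
    fix b assume "b \<in> {b\<in>{0..<int r}. (\<forall>i<n. KK r j b (wg i) \<noteq> {}) \<and> (\<forall>i<n. KK r j b (wh i) \<noteq> {}) \<and>
      int r dvd (\<Sum>i<n. \<sigma>g i * rho r j b (wg i)) - (\<Sum>i<n. \<sigma>h i * rho r j b (wh i))}"
    then have br: "b \<in> {0..<int r}" and kg: "\<forall>i<n. KK r j b (wg i) \<noteq> {}" and kh: "\<forall>i<n. KK r j b (wh i) \<noteq> {}"
      and dv: "int r dvd (\<Sum>i<n. \<sigma>g i * rho r j b (wg i)) - (\<Sum>i<n. \<sigma>h i * rho r j b (wh i))" by auto
    define \<rho> where "\<rho> y = rho r j b y" for y
    have KY: "KK r j b y \<noteq> {}" if "y \<in> Y" for y using that kg kh by (auto simp: Y_def)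
    have s1: "\<forall>l<m. int r dvd (\<rho> (ys ! l) ^ 2 - j * (b - int (ys ! l)))"
    proof (intro allI impI)
      fix l assume "l < m"
      then have "ys ! l \<in> Y" using ysin by (simp add: Y'_def)
      then show "int r dvd (\<rho> (ys ! l) ^ 2 - j * (b - int (ys ! l)))"
        using KY rho_in KK_dvd by (simp add: \<rho>_def)
    qed
    have "(\<Sum>l<m. Ef (ys ! l) * \<rho> (ys ! l)) = (\<Sum>y\<in>Y'. Ef y * \<rho> y)"
      using bij_betw_nth[OF dys, of "{..<m}" Y'] setys
      by (simp add: m_def sum.reindex_bij_betw[where g = "\<lambda>y. Ef y * \<rho> y"])
    also have "\<dots> = (\<Sum>y\<in>Y. Ef y * \<rho> y)"
      by (rule sum.mono_neutral_left) (auto simp: finY Y'_def)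
    also have "\<dots> = (\<Sum>y\<in>Y. (\<Sum>i\<in>{i. i < n \<and> wg i = y}. \<sigma>g i) * \<rho> y) - (\<Sum>y\<in>Y. (\<Sum>i\<in>{i. i < n \<and> wh i = y}. \<sigma>h i) * \<rho> y)"
      by (simp add: Ef_def algebra_simps sum_subtractf)
    also have "\<dots> = (\<Sum>i<n. \<sigma>g i * \<rho> (wg i)) - (\<Sum>i<n. \<sigma>h i * \<rho> (wh i))"
      using regroup[OF finY, of wg n \<sigma>g \<rho>] regroup[OF finY, of wh n \<sigma>h \<rho>] by (auto simp: Y_def)
    finally have d2: "int r dvd (\<Sum>l<m. Ef (ys ! l) * \<rho> (ys ! l))" using dv by (simp add: \<rho>_def)
    have "\<exists>s. (\<forall>l<m. int r dvd (s l ^ 2 - j * (b - int (ys ! l)))) \<and> int r dvd (\<Sum>l<m. Ef (ys ! l) * s l)"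
      by (rule exI[of _ "\<lambda>l. \<rho> (ys ! l)"]) (use s1 d2 in simp)
    then show "b \<in> {x\<in>{0..<int r}. \<exists>s. (\<forall>l<m. int r dvd (s l ^ 2 - j * (x - int (ys ! l)))) \<and>
           int r dvd (\<Sum>l<m. Ef (ys ! l) * s l)}"
      using br by simp
  qed
  have "card {b\<in>{0..<int r}. (\<forall>i<n. KK r j b (wg i) \<noteq> {}) \<and> (\<forall>i<n. KK r j b (wh i) \<noteq> {}) \<and>
      int r dvd (\<Sum>i<n. \<sigma>g i * rho r j b (wg i)) - (\<Sum>i<n. \<sigma>h i * rho r j b (wh i))} \<le> bd m 0"
  proof -
    have "finite {x\<in>{0..<int r}. \<exists>s. (\<forall>l<m. int r dvd (s l ^ 2 - j * (x - int (ys ! l)))) \<and>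
           int r dvd (\<Sum>l<m. Ef (ys ! l) * s l)}" by (rule finite_subset[of _ "{0..<int r}"]) auto
    then show ?thesis using card_mono[OF _ sub] K by linarith
  qed
  also have "bd m 0 \<le> (\<Sum>m\<le>2*n. bd m 0)"
    using m2 by (intro member_le_sum) auto
  finally show ?thesis .
qed


lemma deg_small:
  fixes wg wh :: "nat \<Rightarrow> nat" and \<sigma>g \<sigma>h :: "nat \<Rightarrow> int"
  assumes sg: "\<forall>i<n. \<sigma>g i \<in> {1,-1}" and sh: "\<forall>i<n. \<sigma>h i \<in> {1,-1}"
    and z: "\<forall>y \<in> wg ` {..<n} \<union> wh ` {..<n}. (\<Sum>i\<in>{i. i < n \<and> wg i = y}. \<sigma>g i) - (\<Sum>i\<in>{i. i < n \<and> wh i = y}. \<sigma>h i) = 0"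
  shows "card (wg ` {..<n} \<union> wh ` {..<n}) \<le> n"
proof -
  define Y where "Y = wg ` {..<n} \<union> wh ` {..<n}"
  have finY: "finite Y" by (simp add: Y_def)
  define cg where "cg y = card {i. i < n \<and> wg i = y}" for y
  define ch where "ch y = card {i. i < n \<and> wh i = y}" for y
  have sg_sum: "(\<Sum>y\<in>Y. cg y) = n"
    using card_group[of "{..<n}" Y wg] finY by (simp add: Y_def cg_def)
  have sh_sum: "(\<Sum>y\<in>Y. ch y) = n"
    using card_group[of "{..<n}" Y wh] finY by (simp add: Y_def ch_def)
  have two: "2 \<le> cg y + ch y" if y: "y \<in> Y" for y
  proof (rule ccontr)
    assume "\<not> 2 \<le> cg y + ch y"
    moreover have "1 \<le> cg y + ch y"
    proof -
      from y obtain i where i: "i < n" "wg i = y \<or> wh i = y" by (auto simp: Y_def)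
      have fin: "finite {i. i < n \<and> wg i = y}" "finite {i. i < n \<and> wh i = y}" by auto
      from i have "{i. i < n \<and> wg i = y} \<noteq> {} \<or> {i. i < n \<and> wh i = y} \<noteq> {}" by auto
      then have "0 < cg y \<or> 0 < ch y" unfolding cg_def ch_def by (metis card_gt_0_iff fin(1) fin(2))
      then show ?thesis by linarith
    qed
    ultimately have "(cg y = 1 \<and> ch y = 0) \<or> (cg y = 0 \<and> ch y = 1)" by linarith
    then show False
    proof
      assume c: "cg y = 1 \<and> ch y = 0"
      then obtain i0 where i0: "{i. i < n \<and> wg i = y} = {i0}" by (auto simp: cg_def card_1_singleton_iff)
      have e: "{i. i < n \<and> wh i = y} = {}" using c by (simp add: ch_def)
      have "i0 < n" using i0 by auto
      then have "\<sigma>g i0 \<noteq> 0" using sg by auto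
      moreover have "(\<Sum>i\<in>{i. i < n \<and> wg i = y}. \<sigma>g i) - (\<Sum>i\<in>{i. i < n \<and> wh i = y}. \<sigma>h i) = 0"
        using z y unfolding Y_def by blast
      then have "\<sigma>g i0 - 0 = 0" by (simp only: i0 e sum.empty sum.insert_if finite.emptyI empty_iff if_False add_0_right)
      ultimately show False by simp
    next
      assume c: "cg y = 0 \<and> ch y = 1"
      then obtain i0 where i0: "{i. i < n \<and> wh i = y} = {i0}" by (auto simp: ch_def card_1_singleton_iff)
      have e: "{i. i < n \<and> wg i = y} = {}" using c by (simp add: cg_def)
      have "i0 < n" using i0 by auto
      then have "\<sigma>h i0 \<noteq> 0" using sh by auto
      moreover have "(\<Sum>i\<in>{i. i < n \<and> wg i = y}. \<sigma>g i) - (\<Sum>i\<in>{i. i < n \<and> wh i = y}. \<sigma>h i) = 0"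
        using z y unfolding Y_def by blast
      then have "0 - \<sigma>h i0 = 0" by (simp only: i0 e sum.empty sum.insert_if finite.emptyI empty_iff if_False add_0_right)
      ultimately show False by simp
    qed
  qed
  have "2 * card Y = (\<Sum>y\<in>Y. 2)" by simp
  also have "\<dots> \<le> (\<Sum>y\<in>Y. cg y + ch y)" by (rule sum_mono) (rule two)
  also have "\<dots> = 2 * n" using sg_sum sh_sum by (simp add: sum.distrib)
  finally show ?thesis by (simp add: Y_def)
qed

lemma choose_le_pow: "(NN::nat) choose i \<le> NN ^ i"
  by (cases "i \<le> NN") (simp_all add: binomial_le_pow binomial_eq_0)

lemma small_card:
  fixes Vt :: "nat set"
  assumes finV: "finite Vt"
  shows "card {w \<in> PiE {..<n} (\<lambda>_. Vt) \<times> PiE {..<n} (\<lambda>_. Vt). card (fst w ` {..<n} \<union> snd w ` {..<n}) \<le> n}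
     \<le> (n + 1) * max 1 (card Vt) ^ n * n ^ (2 * n)"
proof -
  define ZZ where "ZZ = {Z. Z \<subseteq> Vt \<and> card Z \<le> n}"
  define M where "M = max 1 (card Vt)"
  have finZZ: "finite ZZ" using finV by (simp add: ZZ_def)
  have sub: "{w \<in> PiE {..<n} (\<lambda>_. Vt) \<times> PiE {..<n} (\<lambda>_. Vt). card (fst w ` {..<n} \<union> snd w ` {..<n}) \<le> n}
      \<subseteq> (\<Union>Z\<in>ZZ. PiE {..<n} (\<lambda>_. Z) \<times> PiE {..<n} (\<lambda>_. Z))"
  proof
    fix w assume w: "w \<in> {w \<in> PiE {..<n} (\<lambda>_. Vt) \<times> PiE {..<n} (\<lambda>_. Vt). card (fst w ` {..<n} \<union> snd w ` {..<n}) \<le> n}"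
    obtain wg wh where ww: "w = (wg, wh)" by (cases w)
    have wg: "wg \<in> PiE {..<n} (\<lambda>_. Vt)" and wh: "wh \<in> PiE {..<n} (\<lambda>_. Vt)"
      and cz: "card (wg ` {..<n} \<union> wh ` {..<n}) \<le> n" using w by (simp_all add: ww)
    define Z where "Z = wg ` {..<n} \<union> wh ` {..<n}"
    have "wg ` {..<n} \<subseteq> Vt" "wh ` {..<n} \<subseteq> Vt" using wg wh by (auto dest: PiE_mem)
    then have "Z \<in> ZZ" using cz by (simp add: Z_def ZZ_def)
    moreover have "wg \<in> PiE {..<n} (\<lambda>_. Z)" using wg unfolding PiE_iff Z_def by blast
    moreover have "wh \<in> PiE {..<n} (\<lambda>_. Z)" using wh unfolding PiE_iff Z_def by blast
    ultimately have "Z \<in> ZZ \<and> w \<in> PiE {..<n} (\<lambda>_. Z) \<times> PiE {..<n} (\<lambda>_. Z)" by (simp add: ww)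
    then show "w \<in> (\<Union>Z\<in>ZZ. PiE {..<n} (\<lambda>_. Z) \<times> PiE {..<n} (\<lambda>_. Z))" by blast
  qed
  have fin_un: "finite (\<Union>Z\<in>ZZ. PiE {..<n} (\<lambda>_. Z) \<times> PiE {..<n} (\<lambda>_. Z))"
    using finZZ by (auto simp: ZZ_def intro!: finite_PiE finite_subset[OF _ finV])
  have "card {w \<in> PiE {..<n} (\<lambda>_. Vt) \<times> PiE {..<n} (\<lambda>_. Vt). card (fst w ` {..<n} \<union> snd w ` {..<n}) \<le> n}
      \<le> card (\<Union>Z\<in>ZZ. PiE {..<n} (\<lambda>_. Z) \<times> PiE {..<n} (\<lambda>_. Z))"
    by (rule card_mono[OF fin_un sub])
  also have "\<dots> \<le> (\<Sum>Z\<in>ZZ. card (PiE {..<n} (\<lambda>_. Z) \<times> PiE {..<n} (\<lambda>_. Z)))"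
    by (rule card_UN_le[OF finZZ])
  also have "\<dots> \<le> (\<Sum>Z\<in>ZZ. n ^ (2 * n))"
  proof (rule sum_mono)
    fix Z assume "Z \<in> ZZ"
    then have "card Z \<le> n" by (simp add: ZZ_def)
    then have "card Z ^ n * card Z ^ n \<le> n ^ n * n ^ n" by (intro mult_le_mono power_mono) auto
    then show "card (PiE {..<n} (\<lambda>_. Z) \<times> PiE {..<n} (\<lambda>_. Z)) \<le> n ^ (2 * n)"
      by (simp add: card_PiE card_cartesian_product power_add[symmetric] mult_2)
  qed
  also have "\<dots> = card ZZ * n ^ (2 * n)" by simp
  also have "card ZZ \<le> (n + 1) * M ^ n"
  proof -
    have "ZZ = (\<Union>i\<in>{..n}. {Z. Z \<subseteq> Vt \<and> card Z = i})" by (auto simp: ZZ_def)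
    then have "card ZZ \<le> (\<Sum>i\<le>n. card {Z. Z \<subseteq> Vt \<and> card Z = i})"
      by (simp add: card_UN_le)
    also have "\<dots> = (\<Sum>i\<le>n. card Vt choose i)" by (simp add: n_subsets[OF finV])
    also have "\<dots> \<le> (\<Sum>i\<le>n. M ^ n)"
    proof (rule sum_mono)
      fix i assume "i \<in> {..n}"
      then have i: "i \<le> n" by simp
      have "card Vt choose i \<le> card Vt ^ i" by (rule choose_le_pow)
      also have "\<dots> \<le> M ^ i" by (rule power_mono) (simp_all add: M_def)
      also have "\<dots> \<le> M ^ n" by (rule power_increasing[OF i]) (simp add: M_def)
      finally show "card Vt choose i \<le> M ^ n" .
    qed
    also have "\<dots> = (n + 1) * M ^ n" by simp
    finally show ?thesis .
  qed
  then have "card ZZ * n ^ (2 * n) \<le> (n + 1) * M ^ n * n ^ (2 * n)" by simp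
  finally show ?thesis by (simp only: M_def)
qed


definition Bs :: "nat \<Rightarrow> int \<Rightarrow> nat \<Rightarrow> (nat \<Rightarrow> nat) \<times> (nat \<Rightarrow> nat) \<Rightarrow> (nat \<Rightarrow> int) \<times> (nat \<Rightarrow> int) \<Rightarrow> int set" where
  "Bs r j n w \<sigma> = {b\<in>{0..<int r}. (\<forall>i<n. KK r j b (fst w i) \<noteq> {}) \<and> (\<forall>i<n. KK r j b (snd w i) \<noteq> {}) \<and>
      int r dvd (\<Sum>i<n. fst \<sigma> i * rho r j b (fst w i)) - (\<Sum>i<n. snd \<sigma> i * rho r j b (snd w i))}"

lemma Bs_bound:
  fixes r n :: nat and j :: int and Vt :: "nat set"
  assumes pr: "prime r" and jc: "\<not> int r dvd j" and Vt: "\<forall>v\<in>Vt. 0 < v \<and> v < r"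
    and w: "w \<in> PiE {..<n} (\<lambda>_. Vt) \<times> PiE {..<n} (\<lambda>_. Vt)"
    and \<sigma>: "\<sigma> \<in> PiE {..<n} (\<lambda>_. {1::int, -1}) \<times> PiE {..<n} (\<lambda>_. {1, -1})"
  shows "card (Bs r j n w \<sigma>) \<le> (\<Sum>m\<le>2*n. bd m 0) + (2 * n + 2) +
           (if card (fst w ` {..<n} \<union> snd w ` {..<n}) \<le> n then r else 0)"
proof -
  obtain wg wh where ww: "w = (wg, wh)" by (cases w)
  obtain \<sigma>g \<sigma>h where ss: "\<sigma> = (\<sigma>g, \<sigma>h)" by (cases \<sigma>)
  have wg: "\<forall>i<n. wg i \<in> Vt" and wh: "\<forall>i<n. wh i \<in> Vt" using w by (auto simp: ww dest: PiE_mem)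
  have sg: "\<forall>i<n. \<sigma>g i \<in> {1,-1}" and sh: "\<forall>i<n. \<sigma>h i \<in> {1,-1}" using \<sigma> by (auto simp: ss dest: PiE_mem)
  have cr: "card (Bs r j n w \<sigma>) \<le> r"
  proof -
    have "card (Bs r j n w \<sigma>) \<le> card {0..<int r}" by (rule card_mono) (auto simp: Bs_def)
    then show ?thesis by simp
  qed
  show ?thesis
  proof (cases "r \<le> 2 * n + 2")
    case True then show ?thesis using cr by linarith
  next
    case False
    define Ef where "Ef = (\<lambda>y. (\<Sum>i\<in>{i. i < n \<and> wg i = y}. \<sigma>g i) - (\<Sum>i\<in>{i. i < n \<and> wh i = y}. \<sigma>h i))"
    show ?thesis
    proof (cases "\<exists>y \<in> wg ` {..<n} \<union> wh ` {..<n}. Ef y \<noteq> 0")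
      case True
      have "card (Bs r j n w \<sigma>) \<le> (\<Sum>m\<le>2*n. bd m 0)"
        unfolding Bs_def ww ss fst_conv snd_conv
        by (rule nondeg_bound[OF _ _ jc Vt wg wh sg sh True[unfolded Ef_def]]) (use pr False in auto)
      then show ?thesis by linarith
    next
      case False
      then have "card (wg ` {..<n} \<union> wh ` {..<n}) \<le> n"
        using deg_small[OF sg sh] by (auto simp: Ef_def)
      then show ?thesis using cr by (simp add: ww)
    qed
  qed
qed

lemma count_main:
  fixes r n :: nat and j :: int and Vt :: "nat set"
  assumes pr: "prime r" and jc: "\<not> int r dvd j" and finV: "finite Vt" and Vt: "\<forall>v\<in>Vt. 0 < v \<and> v < r"
  shows "(\<Sum>b\<in>{0..<int r}. card {(g, h). g \<in> PiE {..<n} (\<lambda>_. Sigma Vt (KK r j b)) \<and> h \<in> PiE {..<n} (\<lambda>_. Sigma Vt (KK r j b)) \<and>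
            int r dvd (\<Sum>i<n. snd (g i)) - (\<Sum>i<n. snd (h i))})
     \<le> 4 ^ n * (card Vt ^ n * card Vt ^ n * ((\<Sum>m\<le>2*n. bd m 0) + (2 * n + 2)) + r * ((n + 1) * max 1 (card Vt) ^ n * n ^ (2 * n)))"
proof -
  define X where "X b = Sigma Vt (KK r j b)" for b
  define C where "C b = {(g, h). g \<in> PiE {..<n} (\<lambda>_. X b) \<and> h \<in> PiE {..<n} (\<lambda>_. X b) \<and>
            int r dvd (\<Sum>i<n. snd (g i)) - (\<Sum>i<n. snd (h i))}" for b
  define W where "W = PiE {..<n} (\<lambda>_. Vt)"
  define Sig where "Sig = PiE {..<n} (\<lambda>_. {1::int, -1}) \<times> PiE {..<n} (\<lambda>_. {1::int, -1})"
  define f where "f = (\<lambda>(g :: nat \<Rightarrow> nat \<times> int, h :: nat \<Rightarrow> nat \<times> int). (restrict (\<lambda>i. fst (g i)) {..<n}, restrict (\<lambda>i. fst (h i)) {..<n}))"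
  define sgn where "sgn b = (\<lambda>(g :: nat \<Rightarrow> nat \<times> int, h :: nat \<Rightarrow> nat \<times> int).
     (restrict (\<lambda>i. if snd (g i) = rho r j b (fst (g i)) then 1 else -1::int) {..<n},
      restrict (\<lambda>i. if snd (h i) = rho r j b (fst (h i)) then 1 else -1::int) {..<n}))" for b
  define Dn where "Dn = (\<Sum>m\<le>2*n. bd m 0)"
  define Small where "Small = {w \<in> W \<times> W. card (fst w ` {..<n} \<union> snd w ` {..<n}) \<le> n}"
  have prI: "prime (int r)" using pr by simp
  have finX: "finite (X b)" for b using finV by (simp add: X_def)
  have finC: "finite (C b)" for b
  proof -
    have "C b \<subseteq> PiE {..<n} (\<lambda>_. X b) \<times> PiE {..<n} (\<lambda>_. X b)" by (auto simp: C_def)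
    then show ?thesis using finX by (meson finite_PiE finite_SigmaI finite_lessThan finite_subset)
  qed
  have finW: "finite W" using finV by (simp add: W_def finite_PiE)
  have finSig: "finite Sig" by (simp add: Sig_def finite_PiE)
  have fC: "f ` C b \<subseteq> W \<times> W" for b
  proof
    fix z assume "z \<in> f ` C b"
    then obtain g h where gh: "(g, h) \<in> C b" "z = f (g, h)" by auto
    have "\<forall>i<n. g i \<in> X b" "\<forall>i<n. h i \<in> X b" using gh(1) by (auto simp: C_def dest: PiE_mem)
    then have "\<forall>i<n. fst (g i) \<in> Vt" "\<forall>i<n. fst (h i) \<in> Vt" by (auto simp: X_def)
    then show "z \<in> W \<times> W" using gh(2) by (auto simp: f_def W_def)
  qed
  have step1: "card (C b) = (\<Sum>w\<in>W \<times> W. card {x\<in>C b. f x = w})" for b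
    by (rule card_group[OF finC _ fC]) (simp add: finW)
  have step2: "card {x\<in>C b. f x = w} \<le> card {\<sigma>\<in>Sig. b \<in> Bs r j n w \<sigma>}" if b: "b \<in> {0..<int r}" for b w
  proof (rule card_inj_on_le[of "sgn b"])
    show "finite {\<sigma>\<in>Sig. b \<in> Bs r j n w \<sigma>}" using finSig by simp
    show "inj_on (sgn b) {x\<in>C b. f x = w}"
    proof (rule inj_onI)
      fix x x' assume x: "x \<in> {x\<in>C b. f x = w}" and x': "x' \<in> {x\<in>C b. f x = w}" and eq: "sgn b x = sgn b x'"
      obtain g h where xgh: "x = (g, h)" by (cases x)
      obtain g' h' where xgh': "x' = (g', h')" by (cases x')
      have gP: "g \<in> PiE {..<n} (\<lambda>_. X b)" "h \<in> PiE {..<n} (\<lambda>_. X b)" using x by (auto simp: xgh C_def)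
      have gP': "g' \<in> PiE {..<n} (\<lambda>_. X b)" "h' \<in> PiE {..<n} (\<lambda>_. X b)" using x' by (auto simp: xgh' C_def)
      have fe: "f (g, h) = f (g', h')" using x x' by (simp add: xgh xgh')
      have agree: "u = u'" if u: "u \<in> PiE {..<n} (\<lambda>_. X b)" and u': "u' \<in> PiE {..<n} (\<lambda>_. X b)"
        and ef: "restrict (\<lambda>i. fst (u i)) {..<n} = restrict (\<lambda>i. fst (u' i)) {..<n}"
        and es: "restrict (\<lambda>i. if snd (u i) = rho r j b (fst (u i)) then 1 else -1::int) {..<n} =
                 restrict (\<lambda>i. if snd (u' i) = rho r j b (fst (u' i)) then 1 else -1::int) {..<n}" for u u'
      proof (rule PiE_ext[OF u u'])
        fix i assume i: "i \<in> {..<n}"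
        have f1: "fst (u i) = fst (u' i)" using fun_cong[OF ef, of i] i by simp
        have s1: "(snd (u i) = rho r j b (fst (u i))) \<longleftrightarrow> (snd (u' i) = rho r j b (fst (u' i)))"
          using fun_cong[OF es, of i] i by (auto split: if_splits)
        have ui: "u i \<in> X b" "u' i \<in> X b" using u u' i by (auto dest: PiE_mem)
        define v where "v = fst (u i)"
        have k1: "snd (u i) \<in> KK r j b v" and k2: "snd (u' i) \<in> KK r j b v"
          using ui f1 by (auto simp: X_def v_def)
        have rin: "rho r j b v \<in> KK r j b v" by (rule rho_in) (use k1 in auto)
        have "snd (u i) = snd (u' i)"
        proof (cases "snd (u i) = rho r j b v")
          case True then show ?thesis using s1 f1 by (simp add: v_def)
        next
          case False
          then have F2: "snd (u' i) \<noteq> rho r j b v" using s1 f1 by (simp add: v_def)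
          have d1: "int r dvd snd (u i) + rho r j b v" using two_roots[OF prI k1 rin] False by blast
          have d2: "int r dvd snd (u' i) + rho r j b v" using two_roots[OF prI k2 rin] F2 by blast
          have "int r dvd snd (u i) - snd (u' i)" using dvd_diff[OF d1 d2] by simp
          then have "snd (u i) mod int r = snd (u' i) mod int r" by (simp add: mod_eq_dvd_iff)
          then show ?thesis using KK_range[OF k1] KK_range[OF k2] by simp
        qed
        then show "u i = u' i" using f1 by (simp add: prod_eq_iff)
      qed
      have "g = g'" using agree[OF gP(1) gP'(1)] fe eq by (simp add: xgh xgh' f_def sgn_def)
      moreover have "h = h'" using agree[OF gP(2) gP'(2)] fe eq by (simp add: xgh xgh' f_def sgn_def)
      ultimately show "x = x'" by (simp add: xgh xgh')
    qed
    show "sgn b ` {x\<in>C b. f x = w} \<subseteq> {\<sigma>\<in>Sig. b \<in> Bs r j n w \<sigma>}"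
    proof
      fix z assume "z \<in> sgn b ` {x\<in>C b. f x = w}"
      then obtain g h where gh: "(g, h) \<in> C b" "f (g, h) = w" "z = sgn b (g, h)" by auto
      have gP: "g \<in> PiE {..<n} (\<lambda>_. X b)" "h \<in> PiE {..<n} (\<lambda>_. X b)"
        and dv: "int r dvd (\<Sum>i<n. snd (g i)) - (\<Sum>i<n. snd (h i))" using gh(1) by (auto simp: C_def)
      have wfst: "fst w i = fst (g i)" "snd w i = fst (h i)" if "i < n" for i
        using gh(2) that by (auto simp: f_def)
      have zs: "fst z i = (if snd (g i) = rho r j b (fst (g i)) then 1 else -1)"
               "snd z i = (if snd (h i) = rho r j b (fst (h i)) then 1 else -1)" if "i < n" for i
        using gh(3) that by (auto simp: sgn_def)
      have inK: "snd (u i) \<in> KK r j b (fst (u i))" if "u \<in> PiE {..<n} (\<lambda>_. X b)" "i < n" for u i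
      proof -
        have "u i \<in> Sigma Vt (KK r j b)" using PiE_mem[OF that(1), of i] that(2) by (simp add: X_def)
        then show ?thesis by (cases "u i") simp
      qed
      have md: "int r dvd snd (u i) - (if snd (u i) = rho r j b (fst (u i)) then 1 else -1) * rho r j b (fst (u i))"
        if "u \<in> PiE {..<n} (\<lambda>_. X b)" "i < n" for u i
      proof (cases "snd (u i) = rho r j b (fst (u i))")
        case True then show ?thesis by simp
      next
        case False
        have rin: "rho r j b (fst (u i)) \<in> KK r j b (fst (u i))" by (rule rho_in) (use inK[OF that] in auto)
        then show ?thesis using two_roots[OF prI inK[OF that] rin] False by simp
      qed
      have zSig: "z \<in> Sig" using gh(3) by (auto simp: sgn_def Sig_def)
      have d1: "int r dvd (\<Sum>i<n. snd (g i) - fst z i * rho r j b (fst w i))"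
        using md[OF gP(1)] by (intro dvd_sum) (simp add: zs wfst)
      have d2: "int r dvd (\<Sum>i<n. snd (h i) - snd z i * rho r j b (snd w i))"
        using md[OF gP(2)] by (intro dvd_sum) (simp add: zs wfst)
      have "int r dvd ((\<Sum>i<n. snd (g i)) - (\<Sum>i<n. snd (h i))) - (\<Sum>i<n. snd (g i) - fst z i * rho r j b (fst w i))
          + (\<Sum>i<n. snd (h i) - snd z i * rho r j b (snd w i))"
        by (rule dvd_add[OF dvd_diff[OF dv d1] d2])
      moreover have "((\<Sum>i<n. snd (g i)) - (\<Sum>i<n. snd (h i))) - (\<Sum>i<n. snd (g i) - fst z i * rho r j b (fst w i))
          + (\<Sum>i<n. snd (h i) - snd z i * rho r j b (snd w i))
          = (\<Sum>i<n. fst z i * rho r j b (fst w i)) - (\<Sum>i<n. snd z i * rho r j b (snd w i))"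
        by (simp add: sum_subtractf)
      ultimately have dz: "int r dvd (\<Sum>i<n. fst z i * rho r j b (fst w i)) - (\<Sum>i<n. snd z i * rho r j b (snd w i))"
        by simp
      have "\<forall>i<n. KK r j b (fst w i) \<noteq> {}" "\<forall>i<n. KK r j b (snd w i) \<noteq> {}"
        using inK[OF gP(1)] inK[OF gP(2)] wfst by (metis empty_iff)+
      then have "b \<in> Bs r j n w z" using b dz by (simp add: Bs_def)
      then show "z \<in> {\<sigma>\<in>Sig. b \<in> Bs r j n w \<sigma>}" using zSig by simp
    qed
  qed
  have "(\<Sum>b\<in>{0..<int r}. card (C b)) = (\<Sum>b\<in>{0..<int r}. \<Sum>w\<in>W \<times> W. card {x\<in>C b. f x = w})"
    by (simp add: step1)
  also have "\<dots> \<le> (\<Sum>b\<in>{0..<int r}. \<Sum>w\<in>W \<times> W. card {\<sigma>\<in>Sig. b \<in> Bs r j n w \<sigma>})"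
    by (intro sum_mono step2)
  also have "\<dots> = (\<Sum>w\<in>W \<times> W. \<Sum>b\<in>{0..<int r}. card {\<sigma>\<in>Sig. b \<in> Bs r j n w \<sigma>})"
    by (rule sum.swap)
  also have "\<dots> = (\<Sum>w\<in>W \<times> W. \<Sum>\<sigma>\<in>Sig. card {b\<in>{0..<int r}. b \<in> Bs r j n w \<sigma>})"
    by (intro sum.cong refl double_count) (simp_all add: finSig)
  also have "\<dots> = (\<Sum>w\<in>W \<times> W. \<Sum>\<sigma>\<in>Sig. card (Bs r j n w \<sigma>))"
    by (intro sum.cong refl arg_cong[where f = card]) (auto simp: Bs_def)
  also have "\<dots> \<le> (\<Sum>w\<in>W \<times> W. \<Sum>\<sigma>\<in>Sig. Dn + (2 * n + 2) + (if w \<in> Small then r else 0))"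
  proof (intro sum_mono)
    fix w \<sigma> assume w: "w \<in> W \<times> W" and \<sigma>: "\<sigma> \<in> Sig"
    show "card (Bs r j n w \<sigma>) \<le> Dn + (2 * n + 2) + (if w \<in> Small then r else 0)"
      using Bs_bound[OF pr jc Vt, of w n \<sigma>] w \<sigma> by (simp add: W_def Sig_def Small_def Dn_def)
  qed
  also have "\<dots> = card Sig * (card (W \<times> W) * (Dn + (2 * n + 2)) + r * card Small)"
  proof -
    have eq: "(\<Sum>w\<in>W \<times> W. (if w \<in> Small then r else 0)) = r * card Small"
      using finW by (simp add: sum.If_cases Small_def Int_def)
    have "(\<Sum>w\<in>W \<times> W. \<Sum>\<sigma>\<in>Sig. Dn + (2 * n + 2) + (if w \<in> Small then r else 0))
        = (\<Sum>w\<in>W \<times> W. card Sig * (Dn + (2 * n + 2) + (if w \<in> Small then r else 0)))" by simp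
    also have "\<dots> = card Sig * (\<Sum>w\<in>W \<times> W. (Dn + (2 * n + 2)) + (if w \<in> Small then r else 0))"
      by (simp only: sum_distrib_left)
    also have "\<dots> = card Sig * (card (W \<times> W) * (Dn + (2 * n + 2)) + r * card Small)"
    proof -
      have s1: "(\<Sum>w\<in>W \<times> W. (Dn + (2 * n + 2)) + (if w \<in> Small then r else 0))
          = (\<Sum>w\<in>W \<times> W. Dn + (2 * n + 2)) + (\<Sum>w\<in>W \<times> W. (if w \<in> Small then r else 0))"
        by (rule sum.distrib)
      have s2: "(\<Sum>w\<in>W \<times> W. Dn + (2 * n + 2)) = card (W \<times> W) * (Dn + (2 * n + 2))" by simp
      show ?thesis by (simp only: s1 s2 eq)
    qed
    finally show ?thesis .
  qed
  also have "\<dots> \<le> 4 ^ n * (card Vt ^ n * card Vt ^ n * (Dn + (2 * n + 2)) + r * ((n + 1) * max 1 (card Vt) ^ n * n ^ (2 * n)))"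
  proof -
    have c2: "card {1::int, -1} = 2" by simp
    have "card Sig = 2 ^ n * 2 ^ n" by (simp only: Sig_def card_PiE card_cartesian_product finite_lessThan c2 prod_constant card_lessThan)
    also have "(2::nat) ^ n * 2 ^ n = 4 ^ n" by (simp add: power_mult_distrib[symmetric])
    finally have cS: "card Sig = 4 ^ n" .
    have cW: "card (W \<times> W) = card Vt ^ n * card Vt ^ n" by (simp add: W_def card_PiE card_cartesian_product)
    have cSm: "card Small \<le> (n + 1) * max 1 (card Vt) ^ n * n ^ (2 * n)"
      using small_card[OF finV, of n] by (simp add: Small_def W_def)
    show ?thesis unfolding cS cW using cSm by (intro mult_le_mono add_le_mono) auto
  qed
  finally show ?thesis by (simp add: C_def X_def Dn_def)
qed


lemma inner_sum_eq:
  assumes "finite Vt"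
  shows "inner_sum r j Vt \<xi> a b = (\<Sum>x\<in>Sigma Vt (KK r j b). ee (real_of_int (a * snd x) / real r + \<xi> * real (fst x)))"
proof -
  have "inner_sum r j Vt \<xi> a b = (\<Sum>v\<in>Vt. \<Sum>k\<in>KK r j b v. ee (real_of_int (a * k) / real r + \<xi> * real v))"
    unfolding inner_sum_def KK_def ee_r_def by (simp add: ee_add)
  also have "\<dots> = (\<Sum>(v, k)\<in>Sigma Vt (KK r j b). ee (real_of_int (a * k) / real r + \<xi> * real v))"
    by (rule sum.Sigma) (simp_all add: assms)
  also have "\<dots> = (\<Sum>x\<in>Sigma Vt (KK r j b). ee (real_of_int (a * snd x) / real r + \<xi> * real (fst x)))"
    by (simp add: case_prod_beta)
  finally show ?thesis .
qed

theorem proposition3: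
  fixes n :: nat
  shows "\<exists>C>0. \<forall>(r::nat) (j::int) (V::real) (Vt::nat set) (\<xi>::real).
     prime r \<longrightarrow> coprime j (int r) \<longrightarrow> 1 \<le> V \<longrightarrow> V < real r \<longrightarrow>
     Vt \<subseteq> {v. V / 2 < real v \<and> real v \<le> V} \<longrightarrow>
     (\<Sum>a\<in>{0..<int r}. \<Sum>b\<in>{0..<int r}. cmod (inner_sum r j Vt \<xi> a b) ^ (2 * n))
       \<le> C * (V ^ (2 * n) + real r * V ^ n) * real r"
proof -
  define Dn where "Dn = (\<Sum>m\<le>2*n. bd m 0)"
  define C where "C = real (4 ^ n * (Dn + (2 * n + 2) + (n + 1) * n ^ (2 * n)))"
  have "(0::nat) < 4 ^ n * (Dn + (2 * n + 2) + (n + 1) * n ^ (2 * n))" by simp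
  then have Cpos: "C > 0" unfolding C_def by (simp only: of_nat_0_less_iff)
  have main: "(\<Sum>a\<in>{0..<int r}. \<Sum>b\<in>{0..<int r}. cmod (inner_sum r j Vt \<xi> a b) ^ (2 * n))
       \<le> C * (V ^ (2 * n) + real r * V ^ n) * real r"
    if pr: "prime r" and cop: "coprime j (int r)" and V1: "1 \<le> V" and Vr: "V < real r"
      and VtV: "Vt \<subseteq> {v. V / 2 < real v \<and> real v \<le> V}" for r j V Vt \<xi>
  proof -
    have r0: "0 < r" using pr by (simp add: prime_gt_0_nat)
    have jc: "\<not> int r dvd j"
    proof
      assume "int r dvd j"
      then have "is_unit (int r)" using cop by (meson coprime_common_divisor dvd_refl)
      then show False using pr by simp
    qed
    have Vt: "\<forall>v\<in>Vt. 0 < v \<and> v < r"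
    proof
      fix v assume "v \<in> Vt"
      then have "V / 2 < real v" "real v \<le> V" using VtV by auto
      then show "0 < v \<and> v < r" using V1 Vr by (auto simp: of_nat_less_iff[symmetric])
    qed
    have VtsubF: "Vt \<subseteq> {1..nat \<lfloor>V\<rfloor>}"
    proof
      fix v assume v: "v \<in> Vt"
      then have "real v \<le> V" using VtV by auto
      then have "int v \<le> \<lfloor>V\<rfloor>" by (simp add: le_floor_iff)
      then show "v \<in> {1..nat \<lfloor>V\<rfloor>}" using Vt v by auto
    qed
    have finV: "finite Vt" using VtsubF finite_subset by blast
    have cV: "real (card Vt) \<le> V"
    proof -
      have "card Vt \<le> nat \<lfloor>V\<rfloor>" using card_mono[OF _ VtsubF] by simp
      then have "real (card Vt) \<le> real (nat \<lfloor>V\<rfloor>)" by linarith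
      also have "\<dots> \<le> V" using V1 by linarith
      finally show ?thesis .
    qed
    have cM: "real (max 1 (card Vt)) \<le> V" using cV V1 by (simp add: max_def)
    define Cb where "Cb b = card {(g, h). g \<in> PiE {..<n} (\<lambda>_. Sigma Vt (KK r j b)) \<and> h \<in> PiE {..<n} (\<lambda>_. Sigma Vt (KK r j b)) \<and>
            int r dvd (\<Sum>i<n. snd (g i)) - (\<Sum>i<n. snd (h i))}" for b
    have per_b: "(\<Sum>a\<in>{0..<int r}. cmod (inner_sum r j Vt \<xi> a b) ^ (2 * n)) \<le> real r * real (Cb b)" for b
      unfolding inner_sum_eq[OF finV] Cb_def
      by (rule fourier_bound) (simp_all add: finV r0)
    have "(\<Sum>a\<in>{0..<int r}. \<Sum>b\<in>{0..<int r}. cmod (inner_sum r j Vt \<xi> a b) ^ (2 * n))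
        = (\<Sum>b\<in>{0..<int r}. \<Sum>a\<in>{0..<int r}. cmod (inner_sum r j Vt \<xi> a b) ^ (2 * n))"
      by (rule sum.swap)
    also have "\<dots> \<le> (\<Sum>b\<in>{0..<int r}. real r * real (Cb b))"
      by (rule sum_mono) (rule per_b)
    also have "\<dots> = real r * real (\<Sum>b\<in>{0..<int r}. Cb b)"
      by (simp add: sum_distrib_left)
    also have "\<dots> \<le> real r * real (4 ^ n * (card Vt ^ n * card Vt ^ n * (Dn + (2 * n + 2)) +
                 r * ((n + 1) * max 1 (card Vt) ^ n * n ^ (2 * n))))"
    proof -
      have "(\<Sum>b\<in>{0..<int r}. Cb b) \<le> 4 ^ n * (card Vt ^ n * card Vt ^ n * (Dn + (2 * n + 2)) +
                 r * ((n + 1) * max 1 (card Vt) ^ n * n ^ (2 * n)))"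
        using count_main[OF pr jc finV Vt, of n] unfolding Cb_def Dn_def .
      then have "real (\<Sum>b\<in>{0..<int r}. Cb b) \<le> real (4 ^ n * (card Vt ^ n * card Vt ^ n * (Dn + (2 * n + 2)) +
                 r * ((n + 1) * max 1 (card Vt) ^ n * n ^ (2 * n))))"
        by (simp only: of_nat_le_iff)
      then show ?thesis by (rule mult_left_mono) simp
    qed
    also have "\<dots> \<le> real r * (C * (V ^ (2 * n) + real r * V ^ n))"
    proof (rule mult_left_mono)
      have p1: "real (card Vt) ^ n * real (card Vt) ^ n \<le> V ^ (2 * n)"
      proof -
        have "real (card Vt) ^ n \<le> V ^ n" by (rule power_mono[OF cV]) simp
        then have "real (card Vt) ^ n * real (card Vt) ^ n \<le> V ^ n * V ^ n"
          using V1 by (intro mult_mono) simp_all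
        also have "\<dots> = V ^ (2 * n)" by (simp add: power_add[symmetric] mult_2)
        finally show ?thesis .
      qed
      have p2: "real (max 1 (card Vt)) ^ n \<le> V ^ n" by (rule power_mono[OF cM]) simp
      define D' where "D' = real (Dn + (2 * n + 2))"
      define N' where "N' = real ((n + 1) * n ^ (2 * n))"
      have D'0: "0 \<le> D'" and N'0: "0 \<le> N'" by (simp_all add: D'_def N'_def)
      have "real (4 ^ n * (card Vt ^ n * card Vt ^ n * (Dn + (2 * n + 2)) +
                 r * ((n + 1) * max 1 (card Vt) ^ n * n ^ (2 * n))))
          = 4 ^ n * ((real (card Vt) ^ n * real (card Vt) ^ n) * D' + real r * (real (max 1 (card Vt)) ^ n) * N')"
        by (simp add: D'_def N'_def algebra_simps)
      also have "\<dots> \<le> 4 ^ n * (V ^ (2 * n) * D' + real r * V ^ n * N')"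
        using p1 p2 D'0 N'0 by (intro mult_left_mono add_mono mult_right_mono) simp_all
      also have "\<dots> \<le> 4 ^ n * ((D' + N') * (V ^ (2 * n) + real r * V ^ n))"
      proof (intro mult_left_mono)
        have "0 \<le> V ^ (2 * n)" "0 \<le> real r * V ^ n" using V1 by simp_all
        then show "V ^ (2 * n) * D' + real r * V ^ n * N' \<le> (D' + N') * (V ^ (2 * n) + real r * V ^ n)"
          using D'0 N'0 by (simp add: algebra_simps)
      qed simp
      also have "\<dots> = C * (V ^ (2 * n) + real r * V ^ n)"
        by (simp add: C_def D'_def N'_def algebra_simps)
      finally show "real (4 ^ n * (card Vt ^ n * card Vt ^ n * (Dn + (2 * n + 2)) +
                 r * ((n + 1) * max 1 (card Vt) ^ n * n ^ (2 * n)))) \<le> C * (V ^ (2 * n) + real r * V ^ n)" .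
    qed simp
    finally show ?thesis by (simp add: mult_ac)
  qed
  show ?thesis using Cpos main by blast
qed


end
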